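(* For each nonnegative integer $k$, \[\sum_{n\geq 0}|\mathsf{Pop}^k(\mathcal{O}(\mathsf{C}_n))|\,x^n=\frac{1-x^{k+1}-\sqrt{(1-x^{k+1})^2-4x(1-x)(1-x^{k+1})}}{2x(1-x)}.\]
   Context: $\mathsf{C}_n$ is the chain with $n$ elements, viewed as a rooted tree (a path) whose root is the top element; for $n=0$ the lattice $\mathcal{O}(\mathsf{C}_0)$ has exactly one element. For a rooted tree $\mathsf{T}$ (poset with the root as maximum, each non-root node covered by its parent), an ornament is a nonempty set of nodes inducing a connected subgraph, and an ornamentation is a map $\delta$ from nodes to ornaments such that the maximal element of $\delta(v)$ is $v$ and any two sets $\delta(v),\delta(v')$ are nested or disjoint. $\mathcal{O}(\mathsf{T})$ is the set of ornamentations ordered by $\delta\leq\delta'$ iff $\delta(v)\subseteq\delta'(v)$ for all $v$; it is a lattice with meet given by pointwise intersection. (For $\mathsf{T}=\mathsf{C}_n$ this is the $n$-th Tamari lattice.) The pop-stack operator is $\mathsf{Pop}(\delta)=\bigwedge(\{\delta\}\cup\{\delta':\delta'\lessdot\delta\})$, and $\mathsf{Pop}^k$ is its $k$-th iterate ($\mathsf{Pop}^0$ the identity). *)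

theory Defs
  imports Complex_Main
begin

text \<open>A rooted tree is given as a finite set of nodes V with a partial order le
  (root = maximum, each non-root node covered by its parent).  Edges of the
  underlying graph are the cover relations.\<close>

definition tcovers :: "'a set \<Rightarrow> ('a \<Rightarrow> 'a \<Rightarrow> bool) \<Rightarrow> 'a \<Rightarrow> 'a \<Rightarrow> bool" where
  "tcovers V le x y \<longleftrightarrow> x \<in> V \<and> y \<in> V \<and> le x y \<and> x \<noteq> y \<and>
     \<not> (\<exists>z\<in>V. le x z \<and> le z y \<and> z \<noteq> x \<and> z \<noteq> y)"

definition induced_connected :: "'a set \<Rightarrow> ('a \<Rightarrow> 'a \<Rightarrow> bool) \<Rightarrow> 'a set \<Rightarrow> bool" where
  "induced_connected V le S \<longleftrightarrow>
     (\<forall>u\<in>S. \<forall>w\<in>S. (\<lambda>a b. a \<in> S \<and> b \<in> S \<and> (tcovers V le a b \<or> tcovers V le b a))\<^sup>*\<^sup>* u w)"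

definition ornament :: "'a set \<Rightarrow> ('a \<Rightarrow> 'a \<Rightarrow> bool) \<Rightarrow> 'a set \<Rightarrow> bool" where
  "ornament V le S \<longleftrightarrow> S \<noteq> {} \<and> S \<subseteq> V \<and> induced_connected V le S"

text \<open>Ornamentations are maps from nodes to ornaments; outside V they are fixed to be empty
  (so that they are determined by their values on V).\<close>
definition ornamentation :: "'a set \<Rightarrow> ('a \<Rightarrow> 'a \<Rightarrow> bool) \<Rightarrow> ('a \<Rightarrow> 'a set) \<Rightarrow> bool" where
  "ornamentation V le \<delta> \<longleftrightarrow>
     (\<forall>v\<in>V. ornament V le (\<delta> v) \<and> v \<in> \<delta> v \<and> (\<forall>u\<in>\<delta> v. le u v)) \<and>
     (\<forall>v\<in>V. \<forall>v'\<in>V. \<delta> v \<subseteq> \<delta> v' \<or> \<delta> v' \<subseteq> \<delta> v \<or> \<delta> v \<inter> \<delta> v' = {}) \<and>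
     (\<forall>v. v \<notin> V \<longrightarrow> \<delta> v = {})"

definition Orn :: "'a set \<Rightarrow> ('a \<Rightarrow> 'a \<Rightarrow> bool) \<Rightarrow> ('a \<Rightarrow> 'a set) set" where
  "Orn V le = {\<delta>. ornamentation V le \<delta>}"

text \<open>The order on O(T) is the pointwise inclusion order on functions.
  Lower covers of \<delta> in O(T):\<close>
definition lower_covers :: "'a set \<Rightarrow> ('a \<Rightarrow> 'a \<Rightarrow> bool) \<Rightarrow> ('a \<Rightarrow> 'a set) \<Rightarrow> ('a \<Rightarrow> 'a set) set" where
  "lower_covers V le \<delta> = {\<delta>'. \<delta>' \<in> Orn V le \<and> \<delta>' < \<delta> \<and>
      \<not> (\<exists>\<delta>''\<in>Orn V le. \<delta>' < \<delta>'' \<and> \<delta>'' < \<delta>)}"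

text \<open>Pop-stack operator; the meet in O(T) is pointwise intersection, i.e. Inf of functions.\<close>
definition Pop :: "'a set \<Rightarrow> ('a \<Rightarrow> 'a \<Rightarrow> bool) \<Rightarrow> ('a \<Rightarrow> 'a set) \<Rightarrow> ('a \<Rightarrow> 'a set)" where
  "Pop V le \<delta> = Inf ({\<delta>} \<union> lower_covers V le \<delta>)"

definition chain_nodes :: "nat \<Rightarrow> nat set" where
  "chain_nodes n = {1..n}"

definition pop_image_card :: "nat \<Rightarrow> nat \<Rightarrow> nat" where
  "pop_image_card k n =
     card ((Pop (chain_nodes n) (\<le>) ^^ k) ` Orn (chain_nodes n) (\<le>))"

end

theory Submission
  imports Defs "HOL-Library.FuncSet" "HOL-Analysis.FPS_Convergence"
begin


definition vld :: "(nat \<Rightarrow> nat) \<Rightarrow> bool" where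
  "vld a \<longleftrightarrow> (\<forall>u v. a v \<le> u \<longrightarrow> u < v \<longrightarrow> a v \<le> a u)"

definition Aset :: "nat \<Rightarrow> (nat \<Rightarrow> nat) set" where
  "Aset n = {a. (\<forall>v. a v \<le> v) \<and> (\<forall>v. (v = 0 \<or> n < v) \<longrightarrow> a v = v) \<and>
                (\<forall>v. 1 \<le> v \<and> v \<le> n \<longrightarrow> 1 \<le> a v) \<and> vld a}"

definition ornof :: "nat \<Rightarrow> (nat \<Rightarrow> nat) \<Rightarrow> nat \<Rightarrow> nat set" where
  "ornof n a v = (if 1 \<le> v \<and> v \<le> n then {a v..v} else {})"

lemma tcovers_chain: "tcovers {1..n} (\<le>) x y \<longleftrightarrow> 1 \<le> x \<and> y \<le> n \<and> y = Suc x"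
proof
  assume H: "tcovers {1..n} (\<le>) x y"
  then have xy: "x \<in> {1..n}" "y \<in> {1..n}" "x < y" unfolding tcovers_def by auto
  have "y = Suc x"
  proof (rule ccontr)
    assume "y \<noteq> Suc x"
    then have "Suc x \<in> {1..n}" "x \<le> Suc x" "Suc x \<le> y" "Suc x \<noteq> x" "Suc x \<noteq> y" using xy by auto
    then show False using H unfolding tcovers_def by blast
  qed
  then show "1 \<le> x \<and> y \<le> n \<and> y = Suc x" using xy by auto
next
  assume "1 \<le> x \<and> y \<le> n \<and> y = Suc x"
  then show "tcovers {1..n} (\<le>) x y" unfolding tcovers_def by auto
qed

lemma tcovers_chain': "tcovers {Suc 0..n} (\<le>) x y \<longleftrightarrow> 1 \<le> x \<and> y \<le> n \<and> y = Suc x"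
  using tcovers_chain[of n x y] by simp

lemma conn_convex:
  fixes S :: "nat set"
  assumes C: "induced_connected {1..n} (\<le>) S" and x: "x \<in> S" and y: "y \<in> S"
    and xz: "x \<le> z" and zy: "z \<le> y"
  shows "z \<in> S"
proof (rule ccontr)
  assume zS: "z \<notin> S"
  let ?R = "\<lambda>a b. a \<in> S \<and> b \<in> S \<and> (tcovers {1..n} (\<le>) a b \<or> tcovers {1..n} (\<le>) b a)"
  have R: "?R\<^sup>*\<^sup>* x y" using C x y unfolding induced_connected_def by blast
  have "x < z" using xz x zS by (cases "x = z") (auto simp: order.order_iff_strict)
  have "\<And>w. ?R\<^sup>*\<^sup>* x w \<Longrightarrow> w < z"
  proof -
    fix w assume "?R\<^sup>*\<^sup>* x w"
    then show "w < z"
    proof (induction rule: rtranclp_induct)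
      case base then show ?case using \<open>x < z\<close> .
    next
      case (step w w')
      then have "w' = Suc w \<or> w = Suc w'" "w' \<in> S" by (auto simp: tcovers_chain tcovers_chain')
      moreover have "w' \<noteq> z" using \<open>w' \<in> S\<close> zS by blast
      ultimately show ?case using step.IH by auto
    qed
  qed
  from this[OF R] zy show False by simp
qed

lemma interval_conn:
  fixes c v n :: nat
  assumes "1 \<le> c" "v \<le> n"
  shows "induced_connected {1..n} (\<le>) {c..v}"
proof -
  let ?S = "{c..v}"
  let ?R = "\<lambda>a b. a \<in> ?S \<and> b \<in> ?S \<and> (tcovers {1..n} (\<le>) a b \<or> tcovers {1..n} (\<le>) b a)"
  have up: "?R\<^sup>*\<^sup>* u (u + d) \<and> ?R\<^sup>*\<^sup>* (u + d) u" if "u \<in> ?S" "u + d \<in> ?S" for u d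
    using that
  proof (induction d)
    case 0 then show ?case by simp
  next
    case (Suc d)
    then have IH: "?R\<^sup>*\<^sup>* u (u + d) \<and> ?R\<^sup>*\<^sup>* (u + d) u" by auto
    have st: "?R (u + d) (u + Suc d)" "?R (u + Suc d) (u + d)"
      using Suc.prems assms by (auto simp: tcovers_chain tcovers_chain')
    have "?R\<^sup>*\<^sup>* u (u + Suc d)"
      using rtranclp.rtrancl_into_rtrancl[of ?R u "u + d" "u + Suc d"] IH st(1) by blast
    moreover have "?R\<^sup>*\<^sup>* (u + Suc d) u"
      using converse_rtranclp_into_rtranclp[of ?R "u + Suc d" "u + d" u] IH st(2) by blast
    ultimately show ?case by blast
  qed
  show ?thesis unfolding induced_connected_def
  proof (intro ballI)
    fix u w assume "u \<in> ?S" "w \<in> ?S"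
    then show "?R\<^sup>*\<^sup>* u w"
      using up[of u "w - u"] up[of w "u - w"] by (cases "u \<le> w") auto
  qed
qed

lemma ornof_in_Orn:
  assumes "a \<in> Aset n" shows "ornof n a \<in> Orn (chain_nodes n) (\<le>)"
proof -
  have A: "\<forall>v. a v \<le> v" "\<forall>v. 1 \<le> v \<and> v \<le> n \<longrightarrow> 1 \<le> a v" "vld a"
    using assms by (auto simp: Aset_def)
  have c1: "\<forall>v\<in>{1..n}. ornament {1..n} (\<le>) (ornof n a v) \<and> v \<in> ornof n a v \<and> (\<forall>u\<in>ornof n a v. u \<le> v)"
  proof
    fix v :: nat assume v: "v \<in> {1..n}"
    then show "ornament {1..n} (\<le>) (ornof n a v) \<and> v \<in> ornof n a v \<and> (\<forall>u\<in>ornof n a v. u \<le> v)"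
      using A interval_conn[of "a v" v n] by (auto simp: ornament_def ornof_def)
  qed
  have lam: "ornof n a v \<subseteq> ornof n a v' \<or> ornof n a v' \<subseteq> ornof n a v \<or> ornof n a v \<inter> ornof n a v' = {}"
    if "v \<in> {1..n}" "v' \<in> {1..n}" "v < v'" for v v'
  proof (cases "a v' \<le> v")
    case True
    then have "a v' \<le> a v" using A(3) that unfolding vld_def by blast
    then show ?thesis using that by (auto simp: ornof_def)
  next
    case False then show ?thesis using that by (auto simp: ornof_def)
  qed
  have c2: "\<forall>v\<in>{1..n}. \<forall>v'\<in>{1..n}. ornof n a v \<subseteq> ornof n a v' \<or> ornof n a v' \<subseteq> ornof n a v \<or> ornof n a v \<inter> ornof n a v' = {}"
  proof (intro ballI)
    fix v v' assume v: "v \<in> {1..n}" and v': "v' \<in> {1..n}"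
    show "ornof n a v \<subseteq> ornof n a v' \<or> ornof n a v' \<subseteq> ornof n a v \<or> ornof n a v \<inter> ornof n a v' = {}"
      using lam[OF v v'] lam[OF v' v] by (cases v v' rule: linorder_cases) auto
  qed
  have c3: "\<forall>v. v \<notin> {1..n} \<longrightarrow> ornof n a v = {}" by (auto simp: ornof_def)
  show ?thesis unfolding Orn_def ornamentation_def chain_nodes_def using c1 c2 c3 by blast
qed

lemma Orn_in_ornof:
  assumes "\<delta> \<in> Orn (chain_nodes n) (\<le>)"
  shows "\<exists>a\<in>Aset n. \<delta> = ornof n a"
proof -
  have O: "\<And>v. v \<in> {1..n} \<Longrightarrow> ornament {1..n} (\<le>) (\<delta> v) \<and> v \<in> \<delta> v \<and> (\<forall>u\<in>\<delta> v. u \<le> v)"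
    and Lam: "\<And>v v'. v \<in> {1..n} \<Longrightarrow> v' \<in> {1..n} \<Longrightarrow> \<delta> v \<subseteq> \<delta> v' \<or> \<delta> v' \<subseteq> \<delta> v \<or> \<delta> v \<inter> \<delta> v' = {}"
    and Out: "\<And>v. v \<notin> {1..n} \<Longrightarrow> \<delta> v = {}"
    using assms unfolding Orn_def chain_nodes_def mem_Collect_eq ornamentation_def by blast+
  define a where "a v = (if v \<in> {1..n} then Min (\<delta> v) else v)" for v
  have iv: "\<delta> v = {a v..v}" if v: "v \<in> {1..n}" for v
  proof -
    have orn: "\<delta> v \<noteq> {}" "\<delta> v \<subseteq> {1..n}" "induced_connected {1..n} (\<le>) (\<delta> v)"
      using O[OF v] by (auto simp: ornament_def)
    have fin: "finite (\<delta> v)" using orn(2) finite_subset by blast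
    have mn: "Min (\<delta> v) \<in> \<delta> v" using fin orn(1) by simp
    show ?thesis
    proof
      show "\<delta> v \<subseteq> {a v..v}" using O[OF v] fin v by (auto simp: a_def)
      show "{a v..v} \<subseteq> \<delta> v"
        using conn_convex[OF orn(3) mn, of v] O[OF v] v by (auto simp: a_def)
    qed
  qed
  have av: "a v \<le> v" for v
  proof (cases "v \<in> {1..n}")
    case True then show ?thesis using iv[OF True] O[OF True] by (metis atLeastAtMost_iff)
  next
    case False then show ?thesis by (auto simp: a_def)
  qed
  have a1: "1 \<le> a v" if "1 \<le> v" "v \<le> n" for v
  proof -
    have vin: "v \<in> {1..n}" using that by simp
    have "a v \<in> \<delta> v" using iv[OF vin] av[of v] by simp
    moreover have "\<delta> v \<subseteq> {1..n}" using O[OF vin] by (simp add: ornament_def)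
    ultimately show ?thesis by auto
  qed
  have vl: "vld a" unfolding vld_def
  proof (intro allI impI)
    fix u v assume u: "a v \<le> u" "u < v"
    show "a v \<le> a u"
    proof (cases "v \<in> {1..n}")
      case False then show ?thesis using u by (simp add: a_def)
    next
      case True
      have a1v: "1 \<le> a v" using True a1[of v] by simp
      have un: "u \<in> {1..n}" using True u a1v by simp
      have ivv: "\<delta> v = {a v..v}" by (rule iv[OF True])
      have ivu: "\<delta> u = {a u..u}" by (rule iv[OF un])
      have auu: "a u \<le> u" by (rule av)
      have "u \<in> \<delta> v" "u \<in> \<delta> u" using ivv ivu u auu by simp_all
      then have "\<delta> u \<subseteq> \<delta> v \<or> \<delta> v \<subseteq> \<delta> u" using Lam[OF True un] by blast
      then show ?thesis
      proof
        assume "\<delta> u \<subseteq> \<delta> v"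
        then have "a u \<in> \<delta> v" using ivu auu by auto
        then show ?thesis using ivv by simp
      next
        assume "\<delta> v \<subseteq> \<delta> u"
        then have "v \<in> \<delta> u" using ivv av[of v] by auto
        then show ?thesis using ivu u by simp
      qed
    qed
  qed
  have "a \<in> Aset n" unfolding Aset_def using av a1 vl by (auto simp: a_def)
  moreover have "\<delta> = ornof n a"
  proof
    fix v show "\<delta> v = ornof n a v"
      using iv Out by (cases "v \<in> {1..n}") (auto simp: ornof_def)
  qed
  ultimately show ?thesis by blast
qed

lemma Orn_eq: "Orn (chain_nodes n) (\<le>) = ornof n ` Aset n"
  using Orn_in_ornof ornof_in_Orn by blast

lemma ornof_le_iff:
  assumes "a \<in> Aset n" "b \<in> Aset n"
  shows "ornof n a \<le> ornof n b \<longleftrightarrow> (\<forall>v. b v \<le> a v)"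
proof
  assume H: "ornof n a \<le> ornof n b"
  show "\<forall>v. b v \<le> a v"
  proof
    fix v show "b v \<le> a v"
    proof (cases "1 \<le> v \<and> v \<le> n")
      case True
      have "{a v..v} \<subseteq> {b v..v}" using H True le_funD[OF H, of v] by (simp add: ornof_def)
      moreover have "a v \<le> v" using assms by (auto simp: Aset_def)
      ultimately show ?thesis by auto
    next
      case False then have "v = 0 \<or> n < v" by auto
      then show ?thesis using assms by (auto simp: Aset_def)
    qed
  qed
next
  assume "\<forall>v. b v \<le> a v"
  then show "ornof n a \<le> ornof n b" by (auto simp: le_fun_def ornof_def)
qed

lemma ornof_inj: "inj_on (ornof n) (Aset n)"
proof (rule inj_onI)
  fix a b assume a: "a \<in> Aset n" and b: "b \<in> Aset n" and e: "ornof n a = ornof n b"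
  then have "\<forall>v. b v \<le> a v" "\<forall>v. a v \<le> b v" using ornof_le_iff by (metis order_refl)+
  then show "a = b" by (intro ext) (meson le_antisym)
qed


definition pop :: "(nat \<Rightarrow> nat) \<Rightarrow> nat \<Rightarrow> nat" where
  "pop a v = (if \<exists>u<v. a u = a v then Suc (Max {u. u < v \<and> a u = a v}) else v)"

lemma pop_no: "\<not> (\<exists>u<v. a u = a v) \<Longrightarrow> pop a v = v"
  unfolding pop_def by (rule if_not_P)

lemma pop_yes: "(\<exists>u<v. a u = a v) \<Longrightarrow> pop a v = Suc (Max {u. u < v \<and> a u = a v})"
  unfolding pop_def by (rule if_P)

lemma maxS:
  fixes a :: "nat \<Rightarrow> nat" and v :: nat
  assumes "\<exists>u<v. a u = a v"
  shows "Max {u. u < v \<and> a u = a v} < v" "a (Max {u. u < v \<and> a u = a v}) = a v"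
    "\<And>u. u < v \<Longrightarrow> a u = a v \<Longrightarrow> u \<le> Max {u. u < v \<and> a u = a v}"
proof -
  let ?S = "{u. u < v \<and> a u = a v}"
  have fin: "finite ?S" by (rule finite_subset[of _ "{..<v}"]) auto
  have ne: "?S \<noteq> {}" using assms by auto
  have "Max ?S \<in> ?S" using Max_in[OF fin ne] .
  then show "Max ?S < v" "a (Max ?S) = a v" by auto
  fix u assume "u < v" "a u = a v" then show "u \<le> Max ?S" using fin by auto
qed

lemma pop_le: "pop a v \<le> v"
proof (cases "\<exists>u<v. a u = a v")
  case True then show ?thesis using maxS(1)[OF True] pop_yes[OF True] by (simp add: Suc_leI)
next
  case False then show ?thesis using pop_no[OF False] by simp
qed

lemma pop_ge: assumes "\<forall>v. a v \<le> v" shows "a v \<le> pop a v"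
proof (cases "\<exists>u<v. a u = a v")
  case True
  define p where "p = Max {u. u < v \<and> a u = a v}"
  have "a p = a v" using maxS(2)[OF True] unfolding p_def .
  moreover have "a p \<le> p" using assms by simp
  ultimately have "a v \<le> Suc p" by simp
  then show ?thesis using pop_yes[OF True] by (simp add: p_def)
next
  case False then show ?thesis using assms pop_no[OF False] by simp
qed

lemma Aset_D:
  assumes "a \<in> Aset n"
  shows "\<And>v. a v \<le> v" "\<And>v. v = 0 \<or> n < v \<Longrightarrow> a v = v" "\<And>v. 1 \<le> v \<Longrightarrow> v \<le> n \<Longrightarrow> 1 \<le> a v"
    "\<And>u v. a v \<le> u \<Longrightarrow> u < v \<Longrightarrow> a v \<le> a u"
proof -
  have H: "\<forall>v. a v \<le> v" "\<forall>v. (v = 0 \<or> n < v) \<longrightarrow> a v = v"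
     "\<forall>v. 1 \<le> v \<and> v \<le> n \<longrightarrow> 1 \<le> a v" "vld a"
  proof -
    have C: "(\<forall>v. a v \<le> v) \<and> (\<forall>v. (v = 0 \<or> n < v) \<longrightarrow> a v = v) \<and>
     (\<forall>v. 1 \<le> v \<and> v \<le> n \<longrightarrow> 1 \<le> a v) \<and> vld a"
      using assms unfolding Aset_def mem_Collect_eq .
    show "\<forall>v. a v \<le> v" using C by (rule conjunct1)
    show "\<forall>v. (v = 0 \<or> n < v) \<longrightarrow> a v = v" using C by (elim conjE)
    show "\<forall>v. 1 \<le> v \<and> v \<le> n \<longrightarrow> 1 \<le> a v" using C by (elim conjE)
    show "vld a" using C by (elim conjE)
  qed
  show "\<And>v. a v \<le> v" by (rule H(1)[rule_format])
  show "\<And>v. v = 0 \<or> n < v \<Longrightarrow> a v = v" by (rule H(2)[rule_format])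
  show "\<And>v. 1 \<le> v \<Longrightarrow> v \<le> n \<Longrightarrow> 1 \<le> a v" using H(3) by simp
  show "\<And>u v. a v \<le> u \<Longrightarrow> u < v \<Longrightarrow> a v \<le> a u" using H(4) unfolding vld_def by simp
qed



lemma AsetI:
  assumes "\<forall>v. b v \<le> v" "\<forall>v. v = 0 \<or> n < v \<longrightarrow> b v = v"
    "\<forall>v. 1 \<le> v \<and> v \<le> n \<longrightarrow> 1 \<le> b v" "vld b"
  shows "b \<in> Aset n"
  unfolding Aset_def mem_Collect_eq using assms by (intro conjI)

lemma Aset_self:
  assumes "a \<in> Aset n" shows "a (a v) = a v"
proof (cases "a v < v")
  case True
  then have "a v \<le> a (a v)" using Aset_D(4)[OF assms, of v "a v"] by simp
  then show ?thesis using Aset_D(1)[OF assms, of "a v"] by simp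
next
  case False then have "a v = v" using Aset_D(1)[OF assms, of v] by simp
  then show ?thesis by simp
qed

lemma ex_iff_lt:
  assumes "a \<in> Aset n" shows "(\<exists>u<v. a u = a v) \<longleftrightarrow> a v < v"
proof
  assume "\<exists>u<v. a u = a v"
  then obtain u where "u < v" "a u = a v" by blast
  then show "a v < v" using Aset_D(1)[OF assms, of u] by simp
next
  assume "a v < v" then show "\<exists>u<v. a u = a v" using Aset_self[OF assms] by blast
qed

lemma pop_Aset:
  assumes A: "a \<in> Aset n" shows "pop a \<in> Aset n"
proof -
  have le: "\<forall>v. pop a v \<le> v" by (simp add: pop_le)
  have out: "pop a v = v" if "v = 0 \<or> n < v" for v
  proof -
    have "a v = v" by (rule Aset_D(2)[OF A that])
    then have "\<not> (\<exists>u<v. a u = a v)" using ex_iff_lt[OF A, of v] by simp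
    then show ?thesis by (rule pop_no)
  qed
  have one: "1 \<le> pop a v" if "1 \<le> v" for v
    using that pop_no[of v a] pop_yes[of v a] by (cases "\<exists>u<v. a u = a v") auto
  have vl: "vld (pop a)" unfolding vld_def
  proof (intro allI impI)
    fix u v assume uv: "pop a v \<le> u" "u < v"
    have exv: "\<exists>w<v. a w = a v"
    proof (rule ccontr)
      assume "\<not> (\<exists>w<v. a w = a v)" then have "pop a v = v" by (rule pop_no)
      then show False using uv by simp
    qed
    define p where "p = Max {w. w < v \<and> a w = a v}"
    have pv: "p < v" "a p = a v" "\<And>w. w < v \<Longrightarrow> a w = a v \<Longrightarrow> w \<le> p"
      using maxS[OF exv] unfolding p_def by auto
    have popv: "pop a v = Suc p" using pop_yes[OF exv] by (simp add: p_def)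
    have avp: "a v \<le> p" using pv(2) Aset_D(1)[OF A, of p] by simp
    have "a v \<le> a u" using Aset_D(4)[OF A, of v u] avp uv popv by simp
    moreover have "a u \<noteq> a v" using pv(3)[of u] uv popv by auto
    ultimately have avu: "a v < a u" by simp
    show "pop a v \<le> pop a u"
    proof (cases "\<exists>w<u. a w = a u")
      case False then show ?thesis using uv pop_no[OF False] by simp
    next
      case True
      define q where "q = Max {w. w < u \<and> a w = a u}"
      have qu: "q < u" "a q = a u" using maxS[OF True] unfolding q_def by auto
      have popu: "pop a u = Suc q" using pop_yes[OF True] by (simp add: q_def)
      have "p \<le> q"
      proof (rule ccontr)
        assume "\<not> p \<le> q"
        then have "a u \<le> p" using qu Aset_D(1)[OF A, of q] by simp
        then have "a u \<le> a p" using Aset_D(4)[OF A, of u p] uv popv by simp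
        then show False using avu pv(2) by simp
      qed
      then show ?thesis using popu popv by simp
    qed
  qed
  have out': "\<forall>v. v = 0 \<or> n < v \<longrightarrow> pop a v = v" using out by (intro allI impI)
  have one': "\<forall>v. 1 \<le> v \<and> v \<le> n \<longrightarrow> 1 \<le> pop a v" using one by simp
  show ?thesis by (rule AsetI[OF le out' one' vl])
qed

lemma claim_min:
  assumes A: "a \<in> Aset n" and C: "c \<in> Aset n" and ac: "\<forall>v. a v \<le> c v"
    and lw: "\<forall>v<w. c v = a v" and w: "a w < c w"
  shows "\<exists>u<w. a u = a w" "pop a w \<le> c w"
proof -
  have "a w < w" using w Aset_D(1)[OF C, of w] by simp
  then show ex: "\<exists>u<w. a u = a w" using ex_iff_lt[OF A] by simp
  define p where "p = Max {u. u < w \<and> a u = a w}"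
  have pw: "p < w" "a p = a w" using maxS[OF ex] unfolding p_def by auto
  have "\<not> c w \<le> p"
  proof
    assume "c w \<le> p"
    then have "c w \<le> c p" using Aset_D(4)[OF C, of w p] pw by simp
    then show False using lw pw w by simp
  qed
  then show "pop a w \<le> c w" using pop_yes[OF ex] by (simp add: p_def)
qed

lemma cov_Aset:
  assumes A: "a \<in> Aset n" and ex: "\<exists>u<w. a u = a w"
  shows "a(w := pop a w) \<in> Aset n"
proof -
  define p where "p = Max {u. u < w \<and> a u = a w}"
  have pw: "p < w" "a p = a w" "\<And>u. u < w \<Longrightarrow> a u = a w \<Longrightarrow> u \<le> p"
    using maxS[OF ex] unfolding p_def by auto
  have popw: "pop a w = Suc p" using pop_yes[OF ex] by (simp add: p_def)
  have wn: "1 \<le> w" "w \<le> n"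
  proof -
    show "1 \<le> w" using pw by simp
    show "w \<le> n"
    proof (rule ccontr)
      assume "\<not> w \<le> n" then have "a w = w" using Aset_D(2)[OF A] by simp
      then show False using ex_iff_lt[OF A, of w] ex by (metis less_irrefl)
    qed
  qed
  let ?b = "a(w := pop a w)"
  have le: "\<forall>v. ?b v \<le> v" using Aset_D(1)[OF A] pop_le by simp
  have out: "\<forall>v. v = 0 \<or> n < v \<longrightarrow> ?b v = v" using Aset_D(2)[OF A] wn by auto
  have one: "\<forall>v. 1 \<le> v \<and> v \<le> n \<longrightarrow> 1 \<le> ?b v" using Aset_D(3)[OF A] popw by simp
  have vl: "vld ?b" unfolding vld_def
  proof (intro allI impI)
    fix u v assume uv: "?b v \<le> u" "u < v"
    show "?b v \<le> ?b u"
    proof (cases "v = w")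
      case True
      then have u: "Suc p \<le> u" "u < w" "u \<noteq> w" using uv popw by auto
      have awp: "a w \<le> p" using pw(2) Aset_D(1)[OF A, of p] by simp
      have "a w \<le> a u" using Aset_D(4)[OF A, of w u] awp u by simp
      moreover have "a u \<noteq> a w" using pw(3)[of u] u by auto
      ultimately have awu: "a w < a u" by simp
      have "\<not> a u \<le> p"
      proof
        assume "a u \<le> p"
        then have "a u \<le> a p" using Aset_D(4)[OF A, of u p] u by simp
        then show False using awu pw(2) by simp
      qed
      then show ?thesis using True u popw by simp
    next
      case False
      then have avu: "a v \<le> u" using uv by simp
      show ?thesis
      proof (cases "u = w")
        case True
        then have "a v \<le> a w" using Aset_D(4)[OF A, of v u] avu uv by simp
        then show ?thesis using True False pop_ge[of a w] Aset_D(1)[OF A] by simp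
      next
        case False2: False
        then show ?thesis using Aset_D(4)[OF A, of v u] avu uv False by simp
      qed
    qed
  qed
  show ?thesis by (rule AsetI[OF le out one vl])
qed

lemma fun_lt_ornof:
  assumes A: "a \<in> Aset n" and B: "b \<in> Aset n"
  shows "ornof n a < ornof n b \<longleftrightarrow> (\<forall>v. b v \<le> a v) \<and> a \<noteq> b"
proof
  assume "ornof n a < ornof n b"
  then have "ornof n a \<le> ornof n b" "ornof n a \<noteq> ornof n b" by auto
  then show "(\<forall>v. b v \<le> a v) \<and> a \<noteq> b" using ornof_le_iff[OF A B] by auto
next
  assume H: "(\<forall>v. b v \<le> a v) \<and> a \<noteq> b"
  then have "ornof n a \<le> ornof n b" using ornof_le_iff[OF A B] by simp
  moreover have "ornof n a \<noteq> ornof n b" using H inj_onD[OF ornof_inj _ A B] by blast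
  ultimately show "ornof n a < ornof n b" by simp
qed

lemma cov_in_LC:
  assumes A: "a \<in> Aset n" and ex: "\<exists>u<w. a u = a w"
  shows "ornof n (a(w := pop a w)) \<in> lower_covers (chain_nodes n) (\<le>) (ornof n a)"
proof -
  let ?b = "a(w := pop a w)"
  have B: "?b \<in> Aset n" by (rule cov_Aset[OF A ex])
  define p where "p = Max {u. u < w \<and> a u = a w}"
  have pw: "p < w" "a p = a w" using maxS[OF ex] unfolding p_def by auto
  have popw: "pop a w = Suc p" using pop_yes[OF ex] by (simp add: p_def)
  have awp: "a w \<le> p" using pw(2) Aset_D(1)[OF A, of p] by simp
  have ab: "\<forall>v. a v \<le> ?b v" using pop_ge[of a] Aset_D(1)[OF A] by simp
  have neq: "?b \<noteq> a" using popw awp by (metis fun_upd_same le_imp_less_Suc less_irrefl)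
  have lt: "ornof n ?b < ornof n a" using fun_lt_ornof[OF B A] ab neq by simp
  have nob: "\<not> (\<exists>d\<in>Orn (chain_nodes n) (\<le>). ornof n ?b < d \<and> d < ornof n a)"
  proof
    assume "\<exists>d\<in>Orn (chain_nodes n) (\<le>). ornof n ?b < d \<and> d < ornof n a"
    then obtain c where C: "c \<in> Aset n" and l1: "ornof n ?b < ornof n c" and l2: "ornof n c < ornof n a"
      unfolding Orn_eq by blast
    have cb: "\<forall>v. c v \<le> ?b v" "c \<noteq> ?b" using fun_lt_ornof[OF B C] l1 by auto
    have ac: "\<forall>v. a v \<le> c v" "c \<noteq> a" using fun_lt_ornof[OF C A] l2 by auto
    have eqo: "\<forall>v. v \<noteq> w \<longrightarrow> c v = a v" using cb(1) ac(1) by (metis fun_upd_other le_antisym)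
    have "c w \<noteq> a w" using eqo ac(2) by (metis ext)
    then have w: "a w < c w" using ac(1) by (simp add: order.strict_iff_order)
    have "pop a w \<le> c w" using claim_min(2)[OF A C ac(1) _ w] eqo by simp
    then have "c w = ?b w" using cb(1) by (metis fun_upd_same le_antisym)
    then have "c = ?b" using eqo by (metis ext fun_upd_other)
    then show False using cb(2) by simp
  qed
  show ?thesis unfolding lower_covers_def using B lt nob Orn_eq by blast
qed

lemma LC_char:
  assumes A: "a \<in> Aset n" and d: "d \<in> lower_covers (chain_nodes n) (\<le>) (ornof n a)"
  shows "\<exists>w. (\<exists>u<w. a u = a w) \<and> d = ornof n (a(w := pop a w))"
proof -
  have dO: "d \<in> Orn (chain_nodes n) (\<le>)" and dl: "d < ornof n a"
    and nob: "\<not> (\<exists>d'\<in>Orn (chain_nodes n) (\<le>). d < d' \<and> d' < ornof n a)"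
    using d unfolding lower_covers_def by auto
  obtain c where C: "c \<in> Aset n" and dc: "d = ornof n c" using dO Orn_eq by blast
  have ac: "\<forall>v. a v \<le> c v" "c \<noteq> a" using fun_lt_ornof[OF C A] dl dc by auto
  have "\<exists>v. a v < c v" using ac by (metis ext order.not_eq_order_implies_strict)
  define w where "w = (LEAST v. a v < c v)"
  have w: "a w < c w" unfolding w_def using \<open>\<exists>v. a v < c v\<close> by (metis LeastI)
  have lw: "\<forall>v<w. c v = a v"
    using not_less_Least[of _ "\<lambda>v. a v < c v"] ac(1) unfolding w_def by (metis le_antisym not_le)
  have ex: "\<exists>u<w. a u = a w" and pc: "pop a w \<le> c w" using claim_min[OF A C ac(1) lw w] by auto
  let ?b = "a(w := pop a w)"
  have B: "?b \<in> Aset n" by (rule cov_Aset[OF A ex])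
  have bc: "\<forall>v. ?b v \<le> c v" using pc ac(1) by simp
  have bl: "ornof n ?b < ornof n a" using cov_in_LC[OF A ex] unfolding lower_covers_def by simp
  have "ornof n c \<le> ornof n ?b" using ornof_le_iff[OF C B] bc by simp
  moreover have "\<not> ornof n c < ornof n ?b" using nob B bl dc Orn_eq by blast
  ultimately have "ornof n c = ornof n ?b" by simp
  then show ?thesis using dc ex by blast
qed

lemma Pop_ornof:
  assumes A: "a \<in> Aset n"
  shows "Pop (chain_nodes n) (\<le>) (ornof n a) = ornof n (pop a)"
proof
  fix v
  let ?X = "{ornof n a} \<union> lower_covers (chain_nodes n) (\<le>) (ornof n a)"
  have eq: "Pop (chain_nodes n) (\<le>) (ornof n a) v = (\<Inter>f\<in>?X. f v)"
    unfolding Pop_def by (simp add: Inf_apply)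
  show "Pop (chain_nodes n) (\<le>) (ornof n a) v = ornof n (pop a) v"
  proof (cases "1 \<le> v \<and> v \<le> n")
    case False
    then have e1: "ornof n a v = {}" "ornof n (pop a) v = {}"
      unfolding ornof_def by (simp_all only: if_not_P[OF False] if_False)
    have "(\<Inter>f\<in>?X. f v) \<subseteq> ornof n a v" by (rule INT_lower) simp
    then show ?thesis using eq e1 by simp
  next
    case True
    have sub1: "(\<Inter>f\<in>?X. f v) \<subseteq> {pop a v..v}"
    proof (cases "\<exists>u<v. a u = a v")
      case True2: True
      have "ornof n (a(v := pop a v)) \<in> ?X" using cov_in_LC[OF A True2] by simp
      then have "(\<Inter>f\<in>?X. f v) \<subseteq> ornof n (a(v := pop a v)) v" by (rule INT_lower)
      moreover have "ornof n (a(v := pop a v)) v = {pop a v..v}" using True by (simp add: ornof_def)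
      ultimately show ?thesis by simp
    next
      case False
      have "a v = v" using ex_iff_lt[OF A, of v] Aset_D(1)[OF A, of v] False by simp
      moreover have "pop a v = v" using pop_no[OF False] .
      moreover have "(\<Inter>f\<in>?X. f v) \<subseteq> ornof n a v" by (rule INT_lower) simp
      ultimately show ?thesis using True by (simp add: ornof_def)
    qed
    have sub2: "{pop a v..v} \<subseteq> (\<Inter>f\<in>?X. f v)"
    proof
      fix x assume x: "x \<in> {pop a v..v}"
      have apv: "a v \<le> pop a v" using pop_ge[of a] Aset_D(1)[OF A] by simp
      show "x \<in> (\<Inter>f\<in>?X. f v)"
      proof
        fix f assume "f \<in> ?X"
        then consider "f = ornof n a" | "f \<in> lower_covers (chain_nodes n) (\<le>) (ornof n a)" by blast
        then show "x \<in> f v"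
        proof cases
          case 1 then show ?thesis using x True apv by (simp add: ornof_def)
        next
          case 2
          then obtain w where fw: "f = ornof n (a(w := pop a w))" using LC_char[OF A] by blast
          show ?thesis unfolding fw using x True apv by (cases "w = v") (simp_all add: ornof_def)
        qed
      qed
    qed
    have "(\<Inter>f\<in>?X. f v) = {pop a v..v}" using sub1 sub2 by (rule equalityI)
    then show ?thesis using eq True by (simp add: ornof_def)
  qed
qed

lemma Popk_ornof:
  assumes A: "a \<in> Aset n"
  shows "(Pop (chain_nodes n) (\<le>) ^^ k) (ornof n a) = ornof n ((pop ^^ k) a)
      \<and> (pop ^^ k) a \<in> Aset n"
proof (induction k)
  case 0 then show ?case using A by simp
next
  case (Suc k)
  then show ?case using Pop_ornof pop_Aset by simp
qed

lemma card_reduce: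
  "pop_image_card k n = card ((pop ^^ k) ` Aset n)"
proof -
  have "(Pop (chain_nodes n) (\<le>) ^^ k) ` Orn (chain_nodes n) (\<le>) = ornof n ` ((pop ^^ k) ` Aset n)"
    unfolding Orn_eq image_image using Popk_ornof by (auto simp: image_iff)
  moreover have "inj_on (ornof n) ((pop ^^ k) ` Aset n)"
    by (rule inj_on_subset[OF ornof_inj]) (use Popk_ornof in auto)
  ultimately show ?thesis unfolding pop_image_card_def by (simp add: card_image)
qed


definition mat :: "(nat \<Rightarrow> nat) \<Rightarrow> bool" where
  "mat b \<longleftrightarrow> (\<forall>v. b v \<le> v) \<and> vld b \<and> (\<forall>u v. u < v \<longrightarrow> b u = b v \<longrightarrow> u = b v)"

lemma matD:
  assumes "mat b"
  shows "\<And>v. b v \<le> v" "\<And>u v. b v \<le> u \<Longrightarrow> u < v \<Longrightarrow> b v \<le> b u"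
    "\<And>u v. u < v \<Longrightarrow> b u = b v \<Longrightarrow> u = b v"
proof -
  have H: "\<forall>v. b v \<le> v" "vld b" "\<forall>u v. u < v \<longrightarrow> b u = b v \<longrightarrow> u = b v"
    using assms unfolding mat_def by simp_all
  show "\<And>v. b v \<le> v" by (rule H(1)[rule_format])
  show "\<And>u v. b v \<le> u \<Longrightarrow> u < v \<Longrightarrow> b v \<le> b u" using H(2) unfolding vld_def by simp
  show "\<And>u v. u < v \<Longrightarrow> b u = b v \<Longrightarrow> u = b v" using H(3) by simp
qed

lemma matI:
  assumes "\<And>v. b v \<le> v" "\<And>u v. b v \<le> u \<Longrightarrow> u < v \<Longrightarrow> b v \<le> b u"
    "\<And>u v. u < v \<Longrightarrow> b u = b v \<Longrightarrow> u = b v"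
  shows "mat b"
  unfolding mat_def vld_def using assms by simp

lemma mat_self: assumes "mat b" shows "b (b v) = b v"
proof (cases "b v < v")
  case True
  then have "b v \<le> b (b v)" using matD(2)[OF assms, of v "b v"] by simp
  then show ?thesis using matD(1)[OF assms, of "b v"] by simp
next
  case False then have "b v = v" using matD(1)[OF assms, of v] by simp
  then show ?thesis by simp
qed

lemma mat_pop_Aset:
  assumes A: "a \<in> Aset n" shows "mat (pop a)"
proof (rule matI)
  show "\<And>v. pop a v \<le> v" by (rule pop_le)
  show "\<And>u v. pop a v \<le> u \<Longrightarrow> u < v \<Longrightarrow> pop a v \<le> pop a u"
    using Aset_D(4)[OF pop_Aset[OF A]] by simp
  fix u v assume uv: "u < v" "pop a u = pop a v"
  show "u = pop a v"
  proof (cases "\<exists>w<v. a w = a v")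
    case False
    then have "pop a v = v" by (rule pop_no)
    then show ?thesis using uv pop_le[of a u] by simp
  next
    case True
    define p where "p = Max {w. w < v \<and> a w = a v}"
    have pv: "p < v" "a p = a v" "\<And>w. w < v \<Longrightarrow> a w = a v \<Longrightarrow> w \<le> p"
      using maxS[OF True] unfolding p_def by auto
    have popv: "pop a v = Suc p" using pop_yes[OF True] by (simp add: p_def)
    show ?thesis
    proof (cases "\<exists>w<u. a w = a u")
      case False
      then have "pop a u = u" by (rule pop_no)
      then show ?thesis using uv by simp
    next
      case True2: True
      define q where "q = Max {w. w < u \<and> a w = a u}"
      have qu: "q < u" "a q = a u" using maxS[OF True2] unfolding q_def by auto
      have popu: "pop a u = Suc q" using pop_yes[OF True2] by (simp add: q_def)
      have "q = p" using popu popv uv by simp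
      then have "a u = a v" using qu pv by simp
      then have "u \<le> p" using pv(3)[of u] uv by simp
      then show ?thesis using qu \<open>q = p\<close> by simp
    qed
  qed
qed

lemma pop_mat:
  assumes M: "mat b" shows "pop b v = (if b v < v then Suc (b v) else v)"
proof (cases "b v < v")
  case True
  have ex: "\<exists>u<v. b u = b v" using True mat_self[OF M, of v] by blast
  have "Max {u. u < v \<and> b u = b v} = b v"
  proof (rule Max_eqI)
    show "finite {u. u < v \<and> b u = b v}" by (rule finite_subset[of _ "{..<v}"]) auto
    show "b v \<in> {u. u < v \<and> b u = b v}" using True mat_self[OF M, of v] by simp
    fix y assume "y \<in> {u. u < v \<and> b u = b v}"
    then show "y \<le> b v" using matD(3)[OF M, of y v] by simp
  qed
  then show ?thesis using pop_yes[OF ex] True by simp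
next
  case False
  have "\<not> (\<exists>u<v. b u = b v)"
  proof
    assume "\<exists>u<v. b u = b v"
    then obtain u where "u < v" "b u = b v" by blast
    then show False using False matD(1)[OF M, of u] matD(1)[OF M, of v] by simp
  qed
  then show ?thesis using pop_no False by simp
qed

lemma mat_pop_mat:
  assumes M: "mat b" shows "mat (pop b)"
proof (rule matI)
  note pm = pop_mat[OF M]
  show "\<And>v. pop b v \<le> v" by (rule pop_le)
  fix u v assume uv: "pop b v \<le> u" "u < v"
  have bv: "b v < v" using uv pm[of v] by (cases "b v < v") auto
  have pv: "pop b v = Suc (b v)" using pm[of v] bv by simp
  have "b v \<le> b u" using matD(2)[OF M, of v u] uv pv by simp
  moreover have "b u \<noteq> b v" using matD(3)[OF M, of u v] uv pv by auto
  ultimately have "b v < b u" by simp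
  then show "pop b v \<le> pop b u" using pv pm[of u] uv by auto
next
  note pm = pop_mat[OF M]
  fix u v assume uv: "u < v" "pop b u = pop b v"
  show "u = pop b v"
  proof (cases "b v < v")
    case False
    then have "pop b v = v" using pm by simp
    then show ?thesis using uv pop_le[of b u] by simp
  next
    case True
    then have pv: "pop b v = Suc (b v)" using pm by simp
    show ?thesis
    proof (cases "b u < u")
      case False then show ?thesis using uv pm[of u] by simp
    next
      case True2: True
      then have "b u = b v" using uv pm[of u] pv by simp
      then have "u = b v" using matD(3)[OF M] uv by simp
      then show ?thesis using True2 \<open>b u = b v\<close> by simp
    qed
  qed
qed

lemma popk_mat:
  assumes M: "mat b"
  shows "(pop ^^ j) b = (\<lambda>v. if b v < v then min (b v + j) v else v) \<and> mat ((pop ^^ j) b)"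
proof (induction j)
  case 0
  have "(\<lambda>v. if b v < v then min (b v + 0) v else v) = b"
    using matD(1)[OF M] by (intro ext) (simp add: not_less le_antisym)
  then show ?case using M by simp
next
  case (Suc j)
  let ?c = "(pop ^^ j) b"
  have c: "?c = (\<lambda>v. if b v < v then min (b v + j) v else v)" "mat ?c" using Suc by auto
  have "(pop ^^ Suc j) b = pop ?c" by simp
  also have "\<dots> = (\<lambda>v. if b v < v then min (b v + Suc j) v else v)"
  proof
    fix v
    have e1: "pop ?c v = (if ?c v < v then Suc (?c v) else v)" by (rule pop_mat[OF c(2)])
    have e2: "?c v = (if b v < v then min (b v + j) v else v)" using c(1) by simp
    show "pop ?c v = (if b v < v then min (b v + Suc j) v else v)"
      unfolding e1 e2 by auto
  qed
  finally show ?case using mat_pop_mat[OF c(2)] by simp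
qed

lemma mat_trunc:
  assumes M: "mat b" shows "mat (\<lambda>v. if P v then b v else v)"
proof (rule matI)
  show "\<And>v. (if P v then b v else v) \<le> v" using matD(1)[OF M] by simp
  fix u v assume uv: "(if P v then b v else v) \<le> u" "u < v"
  then have Pv: "P v" by (cases "P v") auto
  then have "b v \<le> b u" using matD(2)[OF M, of v u] uv by simp
  then show "(if P v then b v else v) \<le> (if P u then b u else u)" using uv Pv by simp
next
  fix u v assume uv: "u < v" "(if P u then b u else u) = (if P v then b v else v)"
  have Pv: "P v"
  proof (rule ccontr)
    assume "\<not> P v"
    then have "(if P u then b u else u) = v" using uv by simp
    then show False using uv matD(1)[OF M, of u] by (cases "P u") auto
  qed
  show "u = (if P v then b v else v)"
  proof (cases "P u")
    case True
    then have "b u = b v" using uv Pv by simp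
    then show ?thesis using matD(3)[OF M] uv Pv by simp
  next
    case False then show ?thesis using uv Pv by simp
  qed
qed

definition LM :: "nat \<Rightarrow> nat \<Rightarrow> nat \<Rightarrow> (nat \<Rightarrow> nat) set" where
  "LM k lo m = {b. mat b \<and> (\<forall>v. (v < lo \<or> lo + m \<le> v) \<longrightarrow> b v = v)
                 \<and> (\<forall>v. b v < v \<longrightarrow> lo \<le> b v \<and> k \<le> v - b v)}"

lemma LMI:
  assumes "mat b" "\<And>v. v < lo \<or> lo + m \<le> v \<Longrightarrow> b v = v"
    "\<And>v. b v < v \<Longrightarrow> lo \<le> b v" "\<And>v. b v < v \<Longrightarrow> k \<le> v - b v"
  shows "b \<in> LM k lo m"
  unfolding LM_def mem_Collect_eq using assms by simp

lemma LMD: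
  assumes "b \<in> LM k lo m"
  shows "mat b" "\<And>v. v < lo \<or> lo + m \<le> v \<Longrightarrow> b v = v"
    "\<And>v. b v < v \<Longrightarrow> lo \<le> b v" "\<And>v. b v < v \<Longrightarrow> k \<le> v - b v"
proof -
  have H: "mat b" "\<forall>v. (v < lo \<or> lo + m \<le> v) \<longrightarrow> b v = v"
     "\<forall>v. b v < v \<longrightarrow> lo \<le> b v \<and> k \<le> v - b v"
    using assms unfolding LM_def mem_Collect_eq by simp_all
  show "mat b" by (rule H(1))
  show "\<And>v. v < lo \<or> lo + m \<le> v \<Longrightarrow> b v = v" by (rule H(2)[rule_format])
  show "\<And>v. b v < v \<Longrightarrow> lo \<le> b v" using H(3) by simp
  show "\<And>v. b v < v \<Longrightarrow> k \<le> v - b v" using H(3) by simp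
qed

definition Phi :: "nat \<Rightarrow> (nat \<Rightarrow> nat) \<Rightarrow> nat \<Rightarrow> nat" where
  "Phi k b = (\<lambda>v. if b v < v then b v + (k - 1) else v)"

lemma pop_lt_Aset:
  assumes A: "a \<in> Aset n" and lt: "pop a v < v"
  shows "2 \<le> pop a v" "v \<le> n"
proof -
  have ex: "\<exists>u<v. a u = a v"
  proof (rule ccontr)
    assume "\<not> (\<exists>u<v. a u = a v)" then have "pop a v = v" by (rule pop_no)
    then show False using lt by simp
  qed
  define p where "p = Max {w. w < v \<and> a w = a v}"
  have pv: "p < v" "a p = a v" using maxS[OF ex] unfolding p_def by auto
  have popv: "pop a v = Suc p" using pop_yes[OF ex] by (simp add: p_def)
  have avl: "a v < v" using ex_iff_lt[OF A] ex by simp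
  show vn: "v \<le> n"
  proof (rule ccontr)
    assume "\<not> v \<le> n" then have "a v = v" using Aset_D(2)[OF A, of v] by simp
    then show False using avl by simp
  qed
  have "1 \<le> v" using pv by simp
  then have "1 \<le> a v" using Aset_D(3)[OF A] vn by simp
  then have "p \<noteq> 0" using pv(2) Aset_D(2)[OF A, of 0] by (cases p) auto
  then show "2 \<le> pop a v" using popv by simp
qed

lemma image_sub:
  assumes k: "1 \<le> k" and A: "a \<in> Aset n"
  shows "(pop ^^ k) a \<in> Phi k ` LM k 2 (n - 1)"
proof -
  let ?b' = "pop a"
  have M': "mat ?b'" by (rule mat_pop_Aset[OF A])
  define b where "b = (\<lambda>v. if ?b' v < v \<and> k \<le> v - ?b' v then ?b' v else v)"
  have Mb: "mat b" unfolding b_def by (rule mat_trunc[OF M'])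
  have bLM: "b \<in> LM k 2 (n - 1)"
  proof (rule LMI[OF Mb])
    fix v assume v: "v < 2 \<or> 2 + (n - 1) \<le> v"
    show "b v = v"
    proof (cases "?b' v < v")
      case True
      then have "2 \<le> ?b' v" "v \<le> n" using pop_lt_Aset[OF A] by auto
      then show ?thesis using v True by auto
    next
      case False then show ?thesis by (simp add: b_def)
    qed
  next
    fix v assume "b v < v"
    then have c: "?b' v < v" "k \<le> v - ?b' v" "b v = ?b' v" unfolding b_def by (auto split: if_splits)
    then show "2 \<le> b v" using pop_lt_Aset[OF A] by simp
    show "k \<le> v - b v" using c by simp
  qed
  have "(pop ^^ k) a = (pop ^^ (k - 1)) ?b'"
    using k by (metis Suc_diff_le diff_Suc_1 funpow_Suc_right o_apply)
  also have "\<dots> = (\<lambda>v. if ?b' v < v then min (?b' v + (k - 1)) v else v)"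
    by (rule conjunct1[OF popk_mat[OF M']])
  also have "\<dots> = Phi k b"
  proof
    fix v show "(if ?b' v < v then min (?b' v + (k - 1)) v else v) = Phi k b v"
      unfolding Phi_def b_def using k by auto
  qed
  finally show ?thesis using bLM by blast
qed

function cm :: "(nat \<Rightarrow> nat) \<Rightarrow> nat \<Rightarrow> nat" where
  "cm b v = (if b v < v then cm b (b v - 1) else v)"
  by auto
termination by (relation "measure snd") auto

declare cm.simps[simp del]

lemma cm_le: "cm b v \<le> v"
proof (induction v rule: less_induct)
  case (less v)
  show ?case
  proof (cases "b v < v")
    case True
    then have "cm b v = cm b (b v - 1)" by (simp add: cm.simps)
    moreover have "cm b (b v - 1) \<le> b v - 1" using less True by simp
    ultimately show ?thesis using True by simp
  next
    case False then show ?thesis by (simp add: cm.simps)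
  qed
qed

lemma cm_id: "\<not> b v < v \<Longrightarrow> cm b v = v" by (simp add: cm.simps)
lemma cm_step: "b v < v \<Longrightarrow> cm b v = cm b (b v - 1)" by (simp add: cm.simps)

lemma cm_pos:
  assumes B: "b \<in> LM k 2 m" shows "1 \<le> v \<Longrightarrow> 1 \<le> cm b v"
proof (induction v rule: less_induct)
  case (less v)
  show ?case
  proof (cases "b v < v")
    case True
    then have "2 \<le> b v" using LMD(3)[OF B] by simp
    then show ?thesis using less True cm_step[of b v, OF True] by simp
  next
    case False then show ?thesis using less cm_id by simp
  qed
qed

lemma cm_ge:
  assumes M: "mat b" and bv: "b v < v"
  shows "b v \<le> w \<Longrightarrow> w < v \<Longrightarrow> b v \<le> cm b w"
proof (induction w rule: less_induct)
  case (less w)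
  show ?case
  proof (cases "b w < w")
    case False then show ?thesis using less cm_id by simp
  next
    case True
    have "b v \<le> b w" using matD(2)[OF M, of v w] less by simp
    moreover have "b w \<noteq> b v"
    proof
      assume "b w = b v"
      then have "w = b v" using matD(3)[OF M, of w v] less by simp
      then have "b w = w" using mat_self[OF M, of v] \<open>b w = b v\<close> by simp
      then show False using True by simp
    qed
    ultimately have "b v < b w" by simp
    then have "b v \<le> cm b (b w - 1)" using less.IH[of "b w - 1"] True less.prems by simp
    then show ?thesis using cm_step[of b w, OF True] by simp
  qed
qed

lemma cm_vld:
  assumes B: "b \<in> LM k 2 m"
  shows "cm b v \<le> u \<Longrightarrow> u < v \<Longrightarrow> cm b v \<le> cm b u"
proof (induction v arbitrary: u rule: less_induct)
  case (less v)
  have M: "mat b" by (rule LMD(1)[OF B])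
  show ?case
  proof (cases "b v < v")
    case False then show ?thesis using less.prems cm_id by simp
  next
    case True
    have cv: "cm b v = cm b (b v - 1)" by (rule cm_step[of b v, OF True])
    have b2: "2 \<le> b v" using LMD(3)[OF B] True by simp
    have cle: "cm b (b v - 1) \<le> b v - 1" by (rule cm_le)
    consider "b v \<le> u" | "u = b v - 1" | "u < b v - 1" by linarith
    then show ?thesis
    proof cases
      case 1
      then have "b v \<le> cm b u" using cm_ge[OF M True] less.prems by simp
      then show ?thesis using cv cle by simp
    next
      case 2 then show ?thesis using cv by simp
    next
      case 3
      have "cm b (b v - 1) \<le> cm b u"
        using less.IH[of "b v - 1" u] 3 less.prems cv True by simp
      then show ?thesis using cv by simp
    qed
  qed
qed

lemma cm_Aset:
  assumes B: "b \<in> LM k 2 (n - 1)" shows "cm b \<in> Aset n"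
proof (rule AsetI)
  show "\<forall>v. cm b v \<le> v" using cm_le by simp
  show "\<forall>v. v = 0 \<or> n < v \<longrightarrow> cm b v = v"
  proof (intro allI impI)
    fix v assume v: "v = 0 \<or> n < v"
    have "b v = v"
    proof (cases "v = 0")
      case True then show ?thesis using matD(1)[OF LMD(1)[OF B], of v] by simp
    next
      case False
      then have "v < 2 \<or> 2 + (n - 1) \<le> v" using v by auto
      then show ?thesis using LMD(2)[OF B] by simp
    qed
    then show "cm b v = v" using cm_id by simp
  qed
  show "\<forall>v. 1 \<le> v \<and> v \<le> n \<longrightarrow> 1 \<le> cm b v" using cm_pos[OF B] by simp
  show "vld (cm b)" unfolding vld_def using cm_vld[OF B] by blast
qed

lemma pop_cm:
  assumes B: "b \<in> LM k 2 m" shows "pop (cm b) = b"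
proof
  fix v
  have M: "mat b" by (rule LMD(1)[OF B])
  show "pop (cm b) v = b v"
  proof (cases "b v < v")
    case True
    have b2: "2 \<le> b v" using LMD(3)[OF B] True by simp
    have cv: "cm b v = cm b (b v - 1)" by (rule cm_step[of b v, OF True])
    have ex: "\<exists>u<v. cm b u = cm b v" using cv True by (intro exI[of _ "b v - 1"]) simp
    have "Max {u. u < v \<and> cm b u = cm b v} = b v - 1"
    proof (rule Max_eqI)
      show "finite {u. u < v \<and> cm b u = cm b v}" by (rule finite_subset[of _ "{..<v}"]) auto
      show "b v - 1 \<in> {u. u < v \<and> cm b u = cm b v}" using cv True by simp
      fix y assume y: "y \<in> {u. u < v \<and> cm b u = cm b v}"
      show "y \<le> b v - 1"
      proof (rule ccontr)
        assume "\<not> y \<le> b v - 1"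
        then have "b v \<le> y" by simp
        moreover have "y < v" using y by simp
        ultimately have "b v \<le> cm b y" by (rule cm_ge[OF M True])
        moreover have "cm b (b v - 1) \<le> b v - 1" by (rule cm_le)
        ultimately show False using y cv b2 by simp
      qed
    qed
    then show ?thesis using pop_yes[OF ex] b2 by simp
  next
    case False
    then have bv: "b v = v" using matD(1)[OF M, of v] by simp
    have cv: "cm b v = v" using cm_id False by simp
    have "\<not> (\<exists>u<v. cm b u = cm b v)"
    proof
      assume "\<exists>u<v. cm b u = cm b v"
      then obtain u where "u < v" "cm b u = cm b v" by blast
      then show False using cm_le[of b u] cv by simp
    qed
    then show ?thesis using pop_no bv by simp
  qed
qed

lemma image_sup:
  assumes k: "1 \<le> k" and B: "b \<in> LM k 2 (n - 1)"
  shows "Phi k b \<in> (pop ^^ k) ` Aset n"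
proof -
  have A: "cm b \<in> Aset n" by (rule cm_Aset[OF B])
  have M: "mat b" by (rule LMD(1)[OF B])
  have "(pop ^^ k) (cm b) = (pop ^^ (k - 1)) (pop (cm b))"
    using k by (metis Suc_diff_le diff_Suc_1 funpow_Suc_right o_apply)
  also have "\<dots> = (pop ^^ (k - 1)) b" using pop_cm[OF B] by simp
  also have "\<dots> = (\<lambda>v. if b v < v then min (b v + (k - 1)) v else v)"
    by (rule conjunct1[OF popk_mat[OF M]])
  also have "\<dots> = Phi k b"
  proof
    fix v show "(if b v < v then min (b v + (k - 1)) v else v) = Phi k b v"
      using LMD(4)[OF B, of v] k unfolding Phi_def by auto
  qed
  finally show ?thesis using A by (metis image_eqI)
qed

lemma Phi_inj:
  assumes k: "1 \<le> k" shows "inj_on (Phi k) (LM k lo m)"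
proof (rule inj_onI)
  fix b c assume B: "b \<in> LM k lo m" and C: "c \<in> LM k lo m" and e: "Phi k b = Phi k c"
  have rec: "d v = (if Phi k d v < v then Phi k d v - (k - 1) else v)" if D: "d \<in> LM k lo m" for d v
  proof (cases "d v < v")
    case True
    then have "k \<le> v - d v" using LMD(4)[OF D] by simp
    then show ?thesis using True k unfolding Phi_def by auto
  next
    case False
    then show ?thesis using matD(1)[OF LMD(1)[OF D], of v] unfolding Phi_def by auto
  qed
  show "b = c"
  proof
    fix v show "b v = c v" using rec[OF B, of v] rec[OF C, of v] e by simp
  qed
qed

lemma card_pos_k:
  assumes k: "1 \<le> k"
  shows "pop_image_card k n = card (LM k 2 (n - 1))"
proof -
  have "(pop ^^ k) ` Aset n = Phi k ` LM k 2 (n - 1)"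
    using image_sub[OF k] image_sup[OF k] by blast
  then show ?thesis using card_reduce card_image[OF Phi_inj[OF k]] by simp
qed


lemma fin_funs:
  "finite {b :: nat \<Rightarrow> nat. (\<forall>v. (v < lo \<or> hi \<le> v) \<longrightarrow> b v = v) \<and> (\<forall>v. b v \<le> v)}"
proof -
  let ?I = "{lo..<hi}"
  let ?F = "(\<lambda>f. \<lambda>v. if v \<in> ?I then f v else v) ` (PiE ?I (\<lambda>_. {..hi}))"
  have "finite ?F" by (intro finite_imageI finite_PiE) auto
  moreover have "{b :: nat \<Rightarrow> nat. (\<forall>v. (v < lo \<or> hi \<le> v) \<longrightarrow> b v = v) \<and> (\<forall>v. b v \<le> v)} \<subseteq> ?F"
  proof
    fix b :: "nat \<Rightarrow> nat" assume "b \<in> {b. (\<forall>v. (v < lo \<or> hi \<le> v) \<longrightarrow> b v = v) \<and> (\<forall>v. b v \<le> v)}"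
    then have H0: "(\<forall>v. (v < lo \<or> hi \<le> v) \<longrightarrow> b v = v) \<and> (\<forall>v. b v \<le> v)" by (rule CollectD)
    have H: "\<And>v. v < lo \<or> hi \<le> v \<Longrightarrow> b v = v" "\<And>v. b v \<le> v"
      using H0 by (simp_all only: conj_imp_eq_imp_imp)
    have r: "restrict b ?I \<in> PiE ?I (\<lambda>_. {..hi})"
    proof (rule restrict_PiE_iff[THEN iffD2], intro ballI)
      fix v assume "v \<in> ?I" then show "b v \<in> {..hi}" using H(2)[of v] by simp
    qed
    have e: "b = (\<lambda>v. if v \<in> ?I then restrict b ?I v else v)"
    proof
      fix v show "b v = (if v \<in> ?I then restrict b ?I v else v)"
        using H(1)[of v] by (cases "v \<in> ?I") auto
    qed
    show "b \<in> ?F" by (rule image_eqI[where x="restrict b ?I", OF _ r]) (rule e)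
  qed
  ultimately show ?thesis by (rule finite_subset[rotated])
qed

lemma LM_finite: "finite (LM k lo m)"
proof (rule finite_subset[OF _ fin_funs[of lo "lo + m"]])
  show "LM k lo m \<subseteq> {b. (\<forall>v. (v < lo \<or> lo + m \<le> v) \<longrightarrow> b v = v) \<and> (\<forall>v. b v \<le> v)}"
  proof
    fix b assume B: "b \<in> LM k lo m"
    show "b \<in> {b. (\<forall>v. (v < lo \<or> lo + m \<le> v) \<longrightarrow> b v = v) \<and> (\<forall>v. b v \<le> v)}"
      using LMD(2)[OF B] matD(1)[OF LMD(1)[OF B]] by simp
  qed
qed

definition glueM :: "nat \<Rightarrow> nat \<Rightarrow> (nat \<Rightarrow> nat) \<Rightarrow> (nat \<Rightarrow> nat) \<Rightarrow> nat \<Rightarrow> nat" where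
  "glueM i v c d = (\<lambda>u. if u = v then i else if u < i then c u else d u)"

lemma glueM_in:
  assumes C: "c \<in> LM k lo j" and D: "d \<in> LM k (Suc (lo + j)) (m - 1 - j)"
    and jm: "j < m" and jk: "j + k \<le> m"
  shows "glueM (lo + j) (lo + m) c d \<in> LM k lo (Suc m)"
proof -
  define i where "i = lo + j"
  define v where "v = lo + m"
  have iv: "i < v" "lo \<le> i" "k \<le> v - i" using jm jk by (auto simp: i_def v_def)
  have rng: "Suc (lo + j) + (m - 1 - j) = v" using jm by (simp add: v_def)
  note Mc = LMD(1)[OF C] and Md = LMD(1)[OF D]
  have c_out: "\<And>u. u < lo \<or> i \<le> u \<Longrightarrow> c u = u" using LMD(2)[OF C] by (simp add: i_def)
  have c_lo: "\<And>u. c u < u \<Longrightarrow> lo \<le> c u" using LMD(3)[OF C] .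
  have c_k: "\<And>u. c u < u \<Longrightarrow> k \<le> u - c u" using LMD(4)[OF C] .
  have d_out: "\<And>u. u < Suc i \<or> v \<le> u \<Longrightarrow> d u = u" using LMD(2)[OF D] rng by (simp add: i_def)
  have d_lo: "\<And>u. d u < u \<Longrightarrow> Suc i \<le> d u" using LMD(3)[OF D] by (simp add: i_def)
  have d_k: "\<And>u. d u < u \<Longrightarrow> k \<le> u - d u" using LMD(4)[OF D] .
  have d_ge: "\<And>u. i \<le> u \<Longrightarrow> i \<le> d u"
  proof -
    fix u assume "i \<le> u"
    then show "i \<le> d u" using d_lo[of u] matD(1)[OF Md, of u] by (cases "d u < u") auto
  qed
  let ?g = "glueM i v c d"
  have gv: "?g v = i" by (simp add: glueM_def)
  have glt: "\<And>u. u \<noteq> v \<Longrightarrow> u < i \<Longrightarrow> ?g u = c u" by (simp add: glueM_def)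
  have gge: "\<And>u. u \<noteq> v \<Longrightarrow> \<not> u < i \<Longrightarrow> ?g u = d u" by (simp add: glueM_def)
  have M: "mat ?g"
  proof (rule matI)
    fix u show "?g u \<le> u"
      using iv matD(1)[OF Mc, of u] matD(1)[OF Md, of u] by (simp add: glueM_def)
  next
    fix u y assume uy: "?g y \<le> u" "u < y"
    show "?g y \<le> ?g u"
    proof (cases "y = v")
      case True
      then have "i \<le> u" "u \<noteq> v" using uy gv by auto
      then show ?thesis using gge[of u] d_ge[of u] True gv by simp
    next
      case yv: False
      show ?thesis
      proof (cases "y < i")
        case True
        then have "u < i" "u \<noteq> v" using uy iv by auto
        then show ?thesis using glt[OF yv True] glt[of u] matD(2)[OF Mc, of y u] uy by simp
      next
        case False
        have gy: "?g y = d y" by (rule gge[OF yv False])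
        have dy: "d y < y" using uy gy by simp
        then have "y < v" using d_out[of y] by (cases "v \<le> y") auto
        have "Suc i \<le> d y" by (rule d_lo[OF dy])
        then have "u \<noteq> v" "\<not> u < i" using uy gy \<open>y < v\<close> by auto
        then show ?thesis using gge[of u] gy matD(2)[OF Md, of y u] uy by simp
      qed
    qed
  next
    fix u y assume uy: "u < y" "?g u = ?g y"
    show "u = ?g y"
    proof (cases "y = v")
      case True
      then have gu: "?g u = i" "u \<noteq> v" using uy gv by auto
      consider "u < i" | "u = i" | "i < u" by linarith
      then show ?thesis
      proof cases
        case 1 then show ?thesis using gu glt[of u] matD(1)[OF Mc, of u] by simp
      next
        case 2 then show ?thesis using True gv by simp
      next
        case 3
        then have "d u = i" using gu gge[of u] by simp
        then show ?thesis using d_lo[of u] 3 by (cases "d u < u") auto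
      qed
    next
      case yv: False
      show ?thesis
      proof (cases "y < i")
        case True
        then have "u < i" "u \<noteq> v" using uy iv by auto
        then show ?thesis using glt[OF yv True] glt[of u] matD(3)[OF Mc, of u y] uy by simp
      next
        case False
        have gy: "?g y = d y" by (rule gge[OF yv False])
        have yv': "y < v"
        proof (rule ccontr)
          assume "\<not> y < v"
          then have "d y = y" using d_out by simp
          moreover have "?g u \<le> u" using iv matD(1)[OF Mc, of u] matD(1)[OF Md, of u] by (simp add: glueM_def)
          ultimately show False using uy gy by simp
        qed
        have uv: "u \<noteq> v" using uy yv' by simp
        show ?thesis
        proof (cases "u < i")
          case True
          have "c u \<le> u" by (rule matD(1)[OF Mc])
          moreover have "c u = d y" using glt[OF uv True] gy uy by simp
          moreover have "i \<le> d y" using d_ge[of y] False by simp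
          ultimately show ?thesis using True by simp
        next
          case False2: False
          then have "d u = d y" using gge[OF uv False2] gy uy by simp
          then show ?thesis using matD(3)[OF Md, of u y] uy gy by simp
        qed
      qed
    qed
  qed
  show ?thesis unfolding i_def[symmetric] v_def[symmetric]
  proof (rule LMI[OF M])
    fix u assume u: "u < lo \<or> lo + Suc m \<le> u"
    show "?g u = u"
    proof (cases "u < lo")
      case True then show ?thesis using glt[of u] c_out[of u] iv by simp
    next
      case False then have "v < u" using u by (simp add: v_def)
      then show ?thesis using gge[of u] d_out[of u] iv by simp
    qed
  next
    fix u assume gu: "?g u < u"
    have "lo \<le> ?g u \<and> k \<le> u - ?g u"
    proof (cases "u = v")
      case True then show ?thesis using gv iv by simp
    next
      case uv: False
      show ?thesis
      proof (cases "u < i")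
        case True then show ?thesis using glt[OF uv True] gu c_lo c_k by simp
      next
        case False
        then have "?g u = d u" using gge[OF uv] by simp
        then show ?thesis using gu d_lo[of u] d_k[of u] iv by simp
      qed
    qed
    then show "lo \<le> ?g u" by simp
  next
    fix u assume gu: "?g u < u"
    show "k \<le> u - ?g u"
    proof (cases "u = v")
      case True then show ?thesis using gv iv by simp
    next
      case uv: False
      show ?thesis
      proof (cases "u < i")
        case True then show ?thesis using glt[OF uv True] gu c_k by simp
      next
        case False
        then have "?g u = d u" using gge[OF uv] by simp
        then show ?thesis using gu d_k[of u] by simp
      qed
    qed
  qed
qed


lemma glueM_surj:
  assumes B: "b \<in> LM k lo (Suc m)" and bv: "b (lo + m) = lo + j" and jm: "j < m"
  shows "(\<lambda>u. if u < lo + j then b u else u) \<in> LM k lo j"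
    "(\<lambda>u. if lo + j < u \<and> u < lo + m then b u else u) \<in> LM k (Suc (lo + j)) (m - 1 - j)"
    "b = glueM (lo + j) (lo + m) (\<lambda>u. if u < lo + j then b u else u)
                                   (\<lambda>u. if lo + j < u \<and> u < lo + m then b u else u)"
proof -
  define i where "i = lo + j"
  define v where "v = lo + m"
  have iv: "i < v" "b v = i" using jm bv by (auto simp: i_def v_def)
  note M = LMD(1)[OF B]
  have rng: "Suc i + (m - 1 - j) = v" using jm by (simp add: v_def i_def)
  show "(\<lambda>u. if u < lo + j then b u else u) \<in> LM k lo j"
  proof (rule LMI)
    show "mat (\<lambda>u. if u < lo + j then b u else u)" by (rule mat_trunc[OF M])
    fix u assume "u < lo \<or> lo + j \<le> u"
    then show "(if u < lo + j then b u else u) = u" using LMD(2)[OF B, of u] by auto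
  next
    fix u assume "(if u < lo + j then b u else u) < u"
    then have "u < lo + j" "b u < u" by (auto split: if_splits)
    then show "lo \<le> (if u < lo + j then b u else u)" "k \<le> u - (if u < lo + j then b u else u)"
      using LMD(3,4)[OF B, of u] by auto
  qed
  show "(\<lambda>u. if lo + j < u \<and> u < lo + m then b u else u) \<in> LM k (Suc (lo + j)) (m - 1 - j)"
  proof (rule LMI)
    show "mat (\<lambda>u. if lo + j < u \<and> u < lo + m then b u else u)" by (rule mat_trunc[OF M])
    fix u assume "u < Suc (lo + j) \<or> Suc (lo + j) + (m - 1 - j) \<le> u"
    then show "(if lo + j < u \<and> u < lo + m then b u else u) = u" using rng by (auto simp: i_def v_def)
  next
    fix u assume "(if lo + j < u \<and> u < lo + m then b u else u) < u"
    then have u: "i < u" "u < v" "b u < u" by (auto split: if_splits simp: i_def v_def)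
    have "i \<le> b u" using matD(2)[OF M, of v u] u iv by simp
    moreover have "b u \<noteq> i"
    proof
      assume "b u = i"
      then have "u = i" using matD(3)[OF M, of u v] u iv by simp
      then show False using u by simp
    qed
    ultimately have "Suc i \<le> b u" by simp
    then show "Suc (lo + j) \<le> (if lo + j < u \<and> u < lo + m then b u else u)"
      using u by (simp add: i_def v_def)
    show "k \<le> u - (if lo + j < u \<and> u < lo + m then b u else u)"
      using LMD(4)[OF B, of u] u by (simp add: i_def v_def)
  qed
  show "b = glueM (lo + j) (lo + m) (\<lambda>u. if u < lo + j then b u else u)
                                   (\<lambda>u. if lo + j < u \<and> u < lo + m then b u else u)"
    unfolding i_def[symmetric] v_def[symmetric]
  proof
    fix u
    show "b u = glueM i v (\<lambda>u. if u < i then b u else u) (\<lambda>u. if i < u \<and> u < v then b u else u) u"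
    proof (cases "u = v")
      case True then show ?thesis using iv by (simp add: glueM_def)
    next
      case uv: False
      consider "u < i" | "u = i" | "i < u \<and> u < v" | "v < u" using uv by linarith
      then show ?thesis
      proof cases
        case 1 then show ?thesis using uv by (simp add: glueM_def)
      next
        case 2
        have "b i = i" using mat_self[OF M, of v] iv by simp
        then show ?thesis using 2 uv by (simp add: glueM_def)
      next
        case 3 then show ?thesis using uv by (simp add: glueM_def)
      next
        case 4
        then have "b u = u" using LMD(2)[OF B, of u] by (simp add: v_def)
        then show ?thesis using 4 uv iv by (simp add: glueM_def)
      qed
    qed
  qed
qed

lemma glueM_inj:
  assumes C: "c \<in> LM k lo j" "c' \<in> LM k lo j"
    and D: "d \<in> LM k (Suc (lo + j)) (m - 1 - j)" "d' \<in> LM k (Suc (lo + j)) (m - 1 - j)"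
    and jm: "j < m"
    and e: "glueM (lo + j) (lo + m) c d = glueM (lo + j) (lo + m) c' d'"
  shows "c = c'" "d = d'"
proof -
  have rng: "Suc (lo + j) + (m - 1 - j) = lo + m" using jm by simp
  show "c = c'"
  proof
    fix u show "c u = c' u"
    proof (cases "u < lo + j")
      case True
      then have "u \<noteq> lo + m" using jm by simp
      then show ?thesis using fun_cong[OF e, of u] True by (simp add: glueM_def)
    next
      case False then show ?thesis using LMD(2)[OF C(1), of u] LMD(2)[OF C(2), of u] by simp
    qed
  qed
  show "d = d'"
  proof
    fix u show "d u = d' u"
    proof (cases "lo + j < u \<and> u < lo + m")
      case True
      then show ?thesis using fun_cong[OF e, of u] by (simp add: glueM_def)
    next
      case False
      then have "u < Suc (lo + j) \<or> Suc (lo + j) + (m - 1 - j) \<le> u" using rng by auto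
      then show ?thesis using LMD(2)[OF D(1), of u] LMD(2)[OF D(2), of u] by simp
    qed
  qed
qed

lemma card_piece:
  assumes jm: "j < m" and jk: "j + k \<le> m"
  shows "card {b \<in> LM k lo (Suc m). b (lo + m) = lo + j}
       = card (LM k lo j) * card (LM k (Suc (lo + j)) (m - 1 - j))"
proof -
  let ?P = "LM k lo j \<times> LM k (Suc (lo + j)) (m - 1 - j)"
  let ?f = "\<lambda>(c, d). glueM (lo + j) (lo + m) c d"
  have "bij_betw ?f ?P {b \<in> LM k lo (Suc m). b (lo + m) = lo + j}"
  proof (rule bij_betw_imageI)
    show "inj_on ?f ?P"
    proof (rule inj_onI)
      fix x y assume xy: "x \<in> ?P" "y \<in> ?P" "?f x = ?f y"
      obtain c d where x: "x = (c, d)" by (cases x)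
      obtain c' d' where y: "y = (c', d')" by (cases y)
      have m: "c \<in> LM k lo j" "d \<in> LM k (Suc (lo + j)) (m - 1 - j)"
        "c' \<in> LM k lo j" "d' \<in> LM k (Suc (lo + j)) (m - 1 - j)" using xy(1,2) x y by simp_all
      have e: "glueM (lo + j) (lo + m) c d = glueM (lo + j) (lo + m) c' d'" using xy(3) x y by simp
      show "x = y" using glueM_inj[OF m(1) m(3) m(2) m(4) jm e] x y by simp
    qed
    show "?f ` ?P = {b \<in> LM k lo (Suc m). b (lo + m) = lo + j}"
    proof
      show "?f ` ?P \<subseteq> {b \<in> LM k lo (Suc m). b (lo + m) = lo + j}"
      proof
        fix b assume "b \<in> ?f ` ?P"
        then obtain c d where cd: "c \<in> LM k lo j" "d \<in> LM k (Suc (lo + j)) (m - 1 - j)"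
          and b: "b = glueM (lo + j) (lo + m) c d" by auto
        have "b \<in> LM k lo (Suc m)" using glueM_in[OF cd jm jk] b by simp
        moreover have "b (lo + m) = lo + j" using b by (simp add: glueM_def)
        ultimately show "b \<in> {b \<in> LM k lo (Suc m). b (lo + m) = lo + j}" by simp
      qed
      show "{b \<in> LM k lo (Suc m). b (lo + m) = lo + j} \<subseteq> ?f ` ?P"
      proof
        fix b assume "b \<in> {b \<in> LM k lo (Suc m). b (lo + m) = lo + j}"
        then have B: "b \<in> LM k lo (Suc m)" and bv: "b (lo + m) = lo + j" by simp_all
        note S = glueM_surj[OF B bv jm]
        let ?c0 = "\<lambda>u. if u < lo + j then b u else u"
        let ?d0 = "\<lambda>u. if lo + j < u \<and> u < lo + m then b u else u"
        have e: "?f (?c0, ?d0) = glueM (lo + j) (lo + m) ?c0 ?d0" by (simp only: prod.case)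
        have mem: "(?c0, ?d0) \<in> ?P" using S(1,2) by (rule SigmaI)
        have "b = ?f (?c0, ?d0)" by (subst e) (rule S(3))
        then show "b \<in> ?f ` ?P" using mem by (rule image_eqI)
      qed
    qed
  qed
  then have "card {b \<in> LM k lo (Suc m). b (lo + m) = lo + j} = card ?P"
    by (simp add: bij_betw_same_card)
  then show ?thesis by (simp add: card_cartesian_product)
qed

lemma LM_split:
  "LM k lo (Suc m) = {b \<in> LM k lo (Suc m). b (lo + m) = lo + m}
     \<union> (\<Union>j\<in>{j. j < m \<and> j + k \<le> m}. {b \<in> LM k lo (Suc m). b (lo + m) = lo + j})"
proof
  show "LM k lo (Suc m) \<subseteq> {b \<in> LM k lo (Suc m). b (lo + m) = lo + m}
     \<union> (\<Union>j\<in>{j. j < m \<and> j + k \<le> m}. {b \<in> LM k lo (Suc m). b (lo + m) = lo + j})"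
  proof
    fix b assume B: "b \<in> LM k lo (Suc m)"
    show "b \<in> {b \<in> LM k lo (Suc m). b (lo + m) = lo + m}
     \<union> (\<Union>j\<in>{j. j < m \<and> j + k \<le> m}. {b \<in> LM k lo (Suc m). b (lo + m) = lo + j})"
    proof (cases "b (lo + m) < lo + m")
      case True
      have l: "lo \<le> b (lo + m)" "k \<le> lo + m - b (lo + m)" using LMD(3,4)[OF B] True by auto
      define j where "j = b (lo + m) - lo"
      have jJ: "j \<in> {j. j < m \<and> j + k \<le> m}" using l True by (auto simp: j_def)
      have "b (lo + m) = lo + j" using l by (simp add: j_def)
      then have "b \<in> {b \<in> LM k lo (Suc m). b (lo + m) = lo + j}" using B by simp
      then show ?thesis using jJ by (intro UnI2 UN_I)
    next
      case False
      then have "b (lo + m) = lo + m" using matD(1)[OF LMD(1)[OF B], of "lo + m"] by simp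
      then have "b \<in> {b \<in> LM k lo (Suc m). b (lo + m) = lo + m}" using B by simp
      then show ?thesis by (rule UnI1)
    qed
  qed
qed auto

lemma LM_last_fix:
  "{b \<in> LM k lo (Suc m). b (lo + m) = lo + m} = LM k lo m"
proof
  show "{b \<in> LM k lo (Suc m). b (lo + m) = lo + m} \<subseteq> LM k lo m"
  proof
    fix b assume "b \<in> {b \<in> LM k lo (Suc m). b (lo + m) = lo + m}"
    then have B: "b \<in> LM k lo (Suc m)" and bv: "b (lo + m) = lo + m" by simp_all
    show "b \<in> LM k lo m"
    proof (rule LMI[OF LMD(1)[OF B]])
      fix v assume v: "v < lo \<or> lo + m \<le> v"
      show "b v = v"
      proof (cases "v = lo + m")
        case True then show ?thesis using bv by simp
      next
        case False then show ?thesis using v LMD(2)[OF B, of v] by auto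
      qed
    qed (use LMD(3,4)[OF B] in auto)
  qed
  show "LM k lo m \<subseteq> {b \<in> LM k lo (Suc m). b (lo + m) = lo + m}"
  proof
    fix b assume B: "b \<in> LM k lo m"
    have "b \<in> LM k lo (Suc m)"
      by (rule LMI[OF LMD(1)[OF B]]) (use LMD(2,3,4)[OF B] in auto)
    moreover have "b (lo + m) = lo + m" using LMD(2)[OF B] by simp
    ultimately show "b \<in> {b \<in> LM k lo (Suc m). b (lo + m) = lo + m}" by simp
  qed
qed

lemma LM_rec:
  "card (LM k lo (Suc m)) = card (LM k lo m) +
     (\<Sum>j\<in>{j. j < m \<and> j + k \<le> m}. card (LM k lo j) * card (LM k (Suc (lo + j)) (m - 1 - j)))"
proof -
  let ?A = "{b \<in> LM k lo (Suc m). b (lo + m) = lo + m}"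
  let ?S = "\<lambda>j. {b \<in> LM k lo (Suc m). b (lo + m) = lo + j}"
  let ?J = "{j. j < m \<and> j + k \<le> m}"
  have finJ: "finite ?J" by (rule finite_subset[of _ "{..<m}"]) auto
  have finS: "\<forall>j\<in>?J. finite (?S j)" using LM_finite by simp
  have disj: "\<forall>i\<in>?J. \<forall>j\<in>?J. i \<noteq> j \<longrightarrow> ?S i \<inter> ?S j = {}"
  proof (intro ballI impI equals0I)
    fix i j b assume ij: "i \<noteq> j" and b: "b \<in> ?S i \<inter> ?S j"
    then have "b (lo + m) = lo + i" "b (lo + m) = lo + j" by simp_all
    then show False using ij by simp
  qed
  have c1: "card (\<Union>j\<in>?J. ?S j) = (\<Sum>j\<in>?J. card (?S j))"
    by (rule card_UN_disjoint[OF finJ finS disj])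
  have d2: "?A \<inter> (\<Union>j\<in>?J. ?S j) = {}"
  proof (rule equals0I)
    fix b assume "b \<in> ?A \<inter> (\<Union>j\<in>?J. ?S j)"
    then obtain j where "j \<in> ?J" "b (lo + m) = lo + m" "b (lo + m) = lo + j" by blast
    then show False by simp
  qed
  have f1: "finite ?A" using LM_finite by simp
  have f2: "finite (\<Union>j\<in>?J. ?S j)" using finJ finS by blast
  have "card (LM k lo (Suc m)) = card ?A + card (\<Union>j\<in>?J. ?S j)"
    by (subst LM_split) (rule card_Un_disjoint[OF f1 f2 d2])
  also have "\<dots> = card (LM k lo m) + (\<Sum>j\<in>?J. card (?S j))" using c1 LM_last_fix by simp
  also have "(\<Sum>j\<in>?J. card (?S j)) = (\<Sum>j\<in>?J. card (LM k lo j) * card (LM k (Suc (lo + j)) (m - 1 - j)))"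
    by (intro sum.cong refl card_piece) auto
  finally show ?thesis .
qed

lemma LM_zero: "LM k lo 0 = {\<lambda>u. u}"
proof
  show "LM k lo 0 \<subseteq> {\<lambda>u. u}"
  proof
    fix b assume B: "b \<in> LM k lo 0"
    have "b = (\<lambda>u. u)"
    proof
      fix u have "u < lo \<or> lo + 0 \<le> u" by auto
      then show "b u = u" by (rule LMD(2)[OF B])
    qed
    then show "b \<in> {\<lambda>u. u}" by simp
  qed
  have M: "mat (\<lambda>u. u)" by (rule matI) simp_all
  have "(\<lambda>u. u) \<in> LM k lo 0" by (rule LMI[OF M]) simp_all
  then show "{\<lambda>u. u} \<subseteq> LM k lo 0" by simp
qed

definition gL :: "nat \<Rightarrow> nat \<Rightarrow> nat" where "gL k m = card (LM k 0 m)"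

lemma LM_indep: "card (LM k lo m) = gL k m"
proof (induction m arbitrary: lo rule: less_induct)
  case (less m)
  show ?case
  proof (cases m)
    case 0 then show ?thesis by (simp add: gL_def LM_zero)
  next
    case (Suc m')
    let ?J = "{j. j < m' \<and> j + k \<le> m'}"
    have IH: "\<And>j lo. j < m \<Longrightarrow> card (LM k lo j) = gL k j" by (rule less.IH)
    have s: "(\<Sum>j\<in>?J. card (LM k lo' j) * card (LM k (Suc (lo' + j)) (m' - 1 - j)))
           = (\<Sum>j\<in>?J. gL k j * gL k (m' - 1 - j))" for lo'
    proof (rule sum.cong[OF refl])
      fix j assume "j \<in> ?J"
      then have "j < m" "m' - 1 - j < m" using Suc by auto
      then show "card (LM k lo' j) * card (LM k (Suc (lo' + j)) (m' - 1 - j)) = gL k j * gL k (m' - 1 - j)"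
        using IH by simp
    qed
    have m'm: "m' < m" using Suc by simp
    have "card (LM k lo m) = gL k m' + (\<Sum>j\<in>?J. gL k j * gL k (m' - 1 - j))"
      using LM_rec[of k lo m'] s[of lo] IH[OF m'm] Suc by simp
    moreover have "gL k m = card (LM k 0 (Suc m'))" using Suc by (simp only: gL_def)
    moreover have "card (LM k 0 (Suc m')) = gL k m' + (\<Sum>j\<in>?J. gL k j * gL k (m' - 1 - j))"
      using LM_rec[of k 0 m'] s[of 0] IH[OF m'm] by simp
    ultimately show ?thesis by (simp only:)
  qed
qed

lemma gL_rec:
  "gL k (Suc m) = gL k m + (\<Sum>j\<in>{j. j < m \<and> j + k \<le> m}. gL k j * gL k (m - 1 - j))"
  using LM_rec[of k 0 m] LM_indep by simp

lemma gL_0: "gL k 0 = 1" by (simp add: gL_def LM_zero)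


definition AP :: "nat \<Rightarrow> nat \<Rightarrow> (nat \<Rightarrow> nat) set" where
  "AP lo m = {a. (\<forall>v. a v \<le> v) \<and> (\<forall>v. (v < lo \<or> lo + m \<le> v) \<longrightarrow> a v = v)
                 \<and> (\<forall>v. lo \<le> v \<longrightarrow> lo \<le> a v) \<and> vld a}"

lemma API:
  assumes "\<And>v. a v \<le> v" "\<And>v. v < lo \<or> lo + m \<le> v \<Longrightarrow> a v = v"
    "\<And>v. lo \<le> v \<Longrightarrow> lo \<le> a v" "\<And>u v. a v \<le> u \<Longrightarrow> u < v \<Longrightarrow> a v \<le> a u"
  shows "a \<in> AP lo m"
  unfolding AP_def mem_Collect_eq vld_def using assms by simp

lemma APD:
  assumes "a \<in> AP lo m"
  shows "\<And>v. a v \<le> v" "\<And>v. v < lo \<or> lo + m \<le> v \<Longrightarrow> a v = v"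
    "\<And>v. lo \<le> v \<Longrightarrow> lo \<le> a v" "\<And>u v. a v \<le> u \<Longrightarrow> u < v \<Longrightarrow> a v \<le> a u"
proof -
  have H: "\<forall>v. a v \<le> v" "\<forall>v. (v < lo \<or> lo + m \<le> v) \<longrightarrow> a v = v"
    "\<forall>v. lo \<le> v \<longrightarrow> lo \<le> a v" "vld a"
    using assms unfolding AP_def mem_Collect_eq by simp_all
  show "\<And>v. a v \<le> v" by (rule H(1)[rule_format])
  show "\<And>v. v < lo \<or> lo + m \<le> v \<Longrightarrow> a v = v" by (rule H(2)[rule_format])
  show "\<And>v. lo \<le> v \<Longrightarrow> lo \<le> a v" using H(3) by simp
  show "\<And>u v. a v \<le> u \<Longrightarrow> u < v \<Longrightarrow> a v \<le> a u" using H(4) unfolding vld_def by simp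
qed

lemma AP_finite: "finite (AP lo m)"
proof (rule finite_subset[OF _ fin_funs[of lo "lo + m"]])
  show "AP lo m \<subseteq> {b. (\<forall>v. (v < lo \<or> lo + m \<le> v) \<longrightarrow> b v = v) \<and> (\<forall>v. b v \<le> v)}"
  proof
    fix b assume B: "b \<in> AP lo m"
    show "b \<in> {b. (\<forall>v. (v < lo \<or> lo + m \<le> v) \<longrightarrow> b v = v) \<and> (\<forall>v. b v \<le> v)}"
      using APD(1,2)[OF B] by simp
  qed
qed

lemma Aset_AP: "Aset n = AP 1 n"
proof
  show "Aset n \<subseteq> AP 1 n"
  proof
    fix a assume A: "a \<in> Aset n"
    show "a \<in> AP 1 n"
    proof (rule API)
      show "\<And>v. a v \<le> v" by (rule Aset_D(1)[OF A])
      show "\<And>v. v < 1 \<or> 1 + n \<le> v \<Longrightarrow> a v = v"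
      proof -
        fix v assume "v < 1 \<or> 1 + n \<le> v"
        then have "v = 0 \<or> n < v" by auto
        then show "a v = v" by (rule Aset_D(2)[OF A])
      qed
      show "\<And>v. 1 \<le> v \<Longrightarrow> 1 \<le> a v"
      proof -
        fix v :: nat assume v: "1 \<le> v"
        show "1 \<le> a v"
        proof (cases "v \<le> n")
          case True then show ?thesis using Aset_D(3)[OF A] v by simp
        next
          case False then have "a v = v" using Aset_D(2)[OF A, of v] by simp
          then show ?thesis using v by simp
        qed
      qed
      show "\<And>u v. a v \<le> u \<Longrightarrow> u < v \<Longrightarrow> a v \<le> a u" by (rule Aset_D(4)[OF A])
    qed
  qed
  show "AP 1 n \<subseteq> Aset n"
  proof
    fix a assume A: "a \<in> AP 1 n"
    show "a \<in> Aset n"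
    proof (rule AsetI)
      show "\<forall>v. a v \<le> v" using APD(1)[OF A] by simp
      show "\<forall>v. v = 0 \<or> n < v \<longrightarrow> a v = v"
      proof (intro allI impI)
        fix v assume "v = 0 \<or> n < v"
        then have "v < 1 \<or> 1 + n \<le> v" by auto
        then show "a v = v" by (rule APD(2)[OF A])
      qed
      show "\<forall>v. 1 \<le> v \<and> v \<le> n \<longrightarrow> 1 \<le> a v" using APD(3)[OF A] by simp
      show "vld a" unfolding vld_def using APD(4)[OF A] by simp
    qed
  qed
qed

lemma vld_trunc:
  fixes a :: "nat \<Rightarrow> nat"
  assumes "\<And>u v. a v \<le> u \<Longrightarrow> u < v \<Longrightarrow> a v \<le> a u"
  shows "\<And>u v. (if P v then a v else v) \<le> u \<Longrightarrow> u < v \<Longrightarrow> (if P v then a v else v) \<le> (if P u then a u else u)"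
proof -
  fix u v assume uv: "(if P v then a v else v) \<le> u" "u < v"
  then have Pv: "P v" by (cases "P v") auto
  then have "a v \<le> a u" using assms[of v u] uv by simp
  then show "(if P v then a v else v) \<le> (if P u then a u else u)" using uv Pv by simp
qed

definition glueA :: "nat \<Rightarrow> nat \<Rightarrow> (nat \<Rightarrow> nat) \<Rightarrow> (nat \<Rightarrow> nat) \<Rightarrow> nat \<Rightarrow> nat" where
  "glueA c v x y = (\<lambda>u. if u = v then c else if u < c then x u else y u)"

lemma glueA_in:
  assumes X: "x \<in> AP lo j" and Y: "y \<in> AP (lo + j) (m - j)" and jm: "j \<le> m"
  shows "glueA (lo + j) (lo + m) x y \<in> AP lo (Suc m)"
proof -
  define c where "c = lo + j"
  define v where "v = lo + m"
  have cv: "c \<le> v" "lo \<le> c" using jm by (auto simp: c_def v_def)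
  have rng: "lo + j + (m - j) = v" using jm by (simp add: v_def)
  have x_out: "\<And>u. u < lo \<or> c \<le> u \<Longrightarrow> x u = u" using APD(2)[OF X] by (simp add: c_def)
  have y_out: "\<And>u. u < c \<or> v \<le> u \<Longrightarrow> y u = u" using APD(2)[OF Y] rng by (simp add: c_def)
  have y_ge: "\<And>u. c \<le> u \<Longrightarrow> c \<le> y u" using APD(3)[OF Y] by (simp add: c_def)
  let ?g = "glueA c v x y"
  have gv: "?g v = c" by (simp add: glueA_def)
  have glt: "\<And>u. u \<noteq> v \<Longrightarrow> u < c \<Longrightarrow> ?g u = x u" by (simp add: glueA_def)
  have gge: "\<And>u. u \<noteq> v \<Longrightarrow> \<not> u < c \<Longrightarrow> ?g u = y u" by (simp add: glueA_def)
  show ?thesis unfolding c_def[symmetric] v_def[symmetric]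
  proof (rule API)
    fix u show "?g u \<le> u"
      using cv APD(1)[OF X, of u] APD(1)[OF Y, of u] by (simp add: glueA_def)
  next
    fix u assume u: "u < lo \<or> lo + Suc m \<le> u"
    show "?g u = u"
    proof (cases "u < lo")
      case True then show ?thesis using glt[of u] x_out[of u] cv by simp
    next
      case False then have "v < u" using u by (simp add: v_def)
      then show ?thesis using gge[of u] y_out[of u] cv by simp
    qed
  next
    fix u assume u: "lo \<le> u"
    show "lo \<le> ?g u"
    proof (cases "u = v")
      case True then show ?thesis using gv cv by simp
    next
      case uv: False
      show ?thesis
      proof (cases "u < c")
        case True then show ?thesis using glt[OF uv True] APD(3)[OF X] u by simp
      next
        case False then show ?thesis using gge[OF uv False] y_ge[of u] cv by simp
      qed
    qed
  next
    fix u w assume uw: "?g w \<le> u" "u < w"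
    show "?g w \<le> ?g u"
    proof (cases "w = v")
      case True
      then have "c \<le> u" "u \<noteq> v" using uw gv by auto
      then show ?thesis using gge[of u] y_ge[of u] True gv by simp
    next
      case wv: False
      show ?thesis
      proof (cases "w < c")
        case True
        then have "u < c" "u \<noteq> v" using uw cv by auto
        then show ?thesis using glt[OF wv True] glt[of u] APD(4)[OF X, of w u] uw by simp
      next
        case False
        have gw: "?g w = y w" by (rule gge[OF wv False])
        have "w < v"
        proof (rule ccontr)
          assume "\<not> w < v" then have "y w = w" using y_out by simp
          then show False using uw gw by simp
        qed
        have "c \<le> y w" using y_ge[of w] False by simp
        then have "u \<noteq> v" "\<not> u < c" using uw gw \<open>w < v\<close> by auto
        then show ?thesis using gge[of u] gw APD(4)[OF Y, of w u] uw by simp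
      qed
    qed
  qed
qed

lemma glueA_surj:
  assumes A: "a \<in> AP lo (Suc m)" and av: "a (lo + m) = lo + j" and jm: "j \<le> m"
  shows "(\<lambda>u. if u < lo + j then a u else u) \<in> AP lo j"
    "(\<lambda>u. if lo + j \<le> u \<and> u < lo + m then a u else u) \<in> AP (lo + j) (m - j)"
    "a = glueA (lo + j) (lo + m) (\<lambda>u. if u < lo + j then a u else u)
                                   (\<lambda>u. if lo + j \<le> u \<and> u < lo + m then a u else u)"
proof -
  define c where "c = lo + j"
  define v where "v = lo + m"
  have cv: "c \<le> v" "a v = c" using jm av by (auto simp: c_def v_def)
  have rng: "lo + j + (m - j) = v" using jm by (simp add: v_def)
  show "(\<lambda>u. if u < lo + j then a u else u) \<in> AP lo j"
  proof (rule API)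
    fix u show "(if u < lo + j then a u else u) \<le> u" using APD(1)[OF A, of u] by simp
  next
    fix u assume "u < lo \<or> lo + j \<le> u"
    then show "(if u < lo + j then a u else u) = u" using APD(2)[OF A, of u] by auto
  next
    fix u assume "lo \<le> u"
    then show "lo \<le> (if u < lo + j then a u else u)" using APD(3)[OF A, of u] by simp
  next
    fix u w show "(if w < lo + j then a w else w) \<le> u \<Longrightarrow> u < w \<Longrightarrow>
        (if w < lo + j then a w else w) \<le> (if u < lo + j then a u else u)"
      by (rule vld_trunc[OF APD(4)[OF A]])
  qed
  show "(\<lambda>u. if lo + j \<le> u \<and> u < lo + m then a u else u) \<in> AP (lo + j) (m - j)"
  proof (rule API)
    fix u show "(if lo + j \<le> u \<and> u < lo + m then a u else u) \<le> u" using APD(1)[OF A, of u] by simp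
  next
    fix u assume "u < lo + j \<or> lo + j + (m - j) \<le> u"
    then show "(if lo + j \<le> u \<and> u < lo + m then a u else u) = u" using rng by (auto simp: v_def)
  next
    fix u assume u: "lo + j \<le> u"
    show "lo + j \<le> (if lo + j \<le> u \<and> u < lo + m then a u else u)"
    proof (cases "u < v")
      case True
      then have "c \<le> a u" using APD(4)[OF A, of v u] u cv by (simp add: c_def)
      then show ?thesis using u True by (simp add: c_def v_def)
    next
      case False then show ?thesis using u by (simp add: v_def)
    qed
  next
    fix u w show "(if lo + j \<le> w \<and> w < lo + m then a w else w) \<le> u \<Longrightarrow> u < w \<Longrightarrow>
        (if lo + j \<le> w \<and> w < lo + m then a w else w) \<le> (if lo + j \<le> u \<and> u < lo + m then a u else u)"
      by (rule vld_trunc[OF APD(4)[OF A]])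
  qed
  show "a = glueA (lo + j) (lo + m) (\<lambda>u. if u < lo + j then a u else u)
                                   (\<lambda>u. if lo + j \<le> u \<and> u < lo + m then a u else u)"
    unfolding c_def[symmetric] v_def[symmetric]
  proof
    fix u
    show "a u = glueA c v (\<lambda>u. if u < c then a u else u) (\<lambda>u. if c \<le> u \<and> u < v then a u else u) u"
    proof (cases "u = v")
      case True then show ?thesis using cv by (simp add: glueA_def)
    next
      case uv: False
      consider "u < c" | "c \<le> u \<and> u < v" | "v < u" using uv by linarith
      then show ?thesis
      proof cases
        case 1 then show ?thesis using uv by (simp add: glueA_def)
      next
        case 2 then show ?thesis using uv by (simp add: glueA_def)
      next
        case 3
        then have "a u = u" using APD(2)[OF A, of u] by (simp add: v_def)
        then show ?thesis using 3 uv cv by (simp add: glueA_def)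
      qed
    qed
  qed
qed

lemma glueA_inj:
  assumes X: "x \<in> AP lo j" "x' \<in> AP lo j"
    and Y: "y \<in> AP (lo + j) (m - j)" "y' \<in> AP (lo + j) (m - j)"
    and jm: "j \<le> m"
    and e: "glueA (lo + j) (lo + m) x y = glueA (lo + j) (lo + m) x' y'"
  shows "x = x'" "y = y'"
proof -
  have rng: "lo + j + (m - j) = lo + m" using jm by simp
  show "x = x'"
  proof
    fix u show "x u = x' u"
    proof (cases "u < lo + j")
      case True
      then have "u \<noteq> lo + m" using jm by simp
      then show ?thesis using fun_cong[OF e, of u] True by (simp add: glueA_def)
    next
      case False then show ?thesis using APD(2)[OF X(1), of u] APD(2)[OF X(2), of u] by simp
    qed
  qed
  show "y = y'"
  proof
    fix u show "y u = y' u"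
    proof (cases "lo + j \<le> u \<and> u < lo + m")
      case True
      then show ?thesis using fun_cong[OF e, of u] by (simp add: glueA_def)
    next
      case False
      then have "u < lo + j \<or> lo + j + (m - j) \<le> u" using rng by auto
      then show ?thesis using APD(2)[OF Y(1), of u] APD(2)[OF Y(2), of u] by simp
    qed
  qed
qed

lemma card_pieceA:
  assumes jm: "j \<le> m"
  shows "card {a \<in> AP lo (Suc m). a (lo + m) = lo + j}
       = card (AP lo j) * card (AP (lo + j) (m - j))"
proof -
  let ?P = "AP lo j \<times> AP (lo + j) (m - j)"
  let ?f = "\<lambda>(x, y). glueA (lo + j) (lo + m) x y"
  have "bij_betw ?f ?P {a \<in> AP lo (Suc m). a (lo + m) = lo + j}"
  proof (rule bij_betw_imageI)
    show "inj_on ?f ?P"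
    proof (rule inj_onI)
      fix p q assume pq: "p \<in> ?P" "q \<in> ?P" "?f p = ?f q"
      obtain x y where p: "p = (x, y)" by (cases p)
      obtain x' y' where q: "q = (x', y')" by (cases q)
      have m: "x \<in> AP lo j" "y \<in> AP (lo + j) (m - j)"
        "x' \<in> AP lo j" "y' \<in> AP (lo + j) (m - j)" using pq(1,2) p q by simp_all
      have e: "glueA (lo + j) (lo + m) x y = glueA (lo + j) (lo + m) x' y'" using pq(3) p q by simp
      show "p = q" using glueA_inj[OF m(1) m(3) m(2) m(4) jm e] p q by simp
    qed
    show "?f ` ?P = {a \<in> AP lo (Suc m). a (lo + m) = lo + j}"
    proof
      show "?f ` ?P \<subseteq> {a \<in> AP lo (Suc m). a (lo + m) = lo + j}"
      proof
        fix a assume "a \<in> ?f ` ?P"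
        then obtain x y where xy: "x \<in> AP lo j" "y \<in> AP (lo + j) (m - j)"
          and a: "a = glueA (lo + j) (lo + m) x y" by auto
        have "a \<in> AP lo (Suc m)" using glueA_in[OF xy jm] a by simp
        moreover have "a (lo + m) = lo + j" using a by (simp add: glueA_def)
        ultimately show "a \<in> {a \<in> AP lo (Suc m). a (lo + m) = lo + j}" by simp
      qed
      show "{a \<in> AP lo (Suc m). a (lo + m) = lo + j} \<subseteq> ?f ` ?P"
      proof
        fix a assume "a \<in> {a \<in> AP lo (Suc m). a (lo + m) = lo + j}"
        then have A: "a \<in> AP lo (Suc m)" and av: "a (lo + m) = lo + j" by simp_all
        note S = glueA_surj[OF A av jm]
        let ?x0 = "\<lambda>u. if u < lo + j then a u else u"
        let ?y0 = "\<lambda>u. if lo + j \<le> u \<and> u < lo + m then a u else u"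
        have e: "?f (?x0, ?y0) = glueA (lo + j) (lo + m) ?x0 ?y0" by (simp only: prod.case)
        have mem: "(?x0, ?y0) \<in> ?P" using S(1,2) by (rule SigmaI)
        have "a = ?f (?x0, ?y0)" by (subst e) (rule S(3))
        then show "a \<in> ?f ` ?P" using mem by (rule image_eqI)
      qed
    qed
  qed
  then have "card {a \<in> AP lo (Suc m). a (lo + m) = lo + j} = card ?P"
    by (simp add: bij_betw_same_card)
  then show ?thesis by (simp add: card_cartesian_product)
qed

lemma AP_split:
  "AP lo (Suc m) = (\<Union>j\<in>{..m}. {a \<in> AP lo (Suc m). a (lo + m) = lo + j})"
proof
  show "AP lo (Suc m) \<subseteq> (\<Union>j\<in>{..m}. {a \<in> AP lo (Suc m). a (lo + m) = lo + j})"
  proof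
    fix a assume A: "a \<in> AP lo (Suc m)"
    have l: "lo \<le> a (lo + m)" "a (lo + m) \<le> lo + m" using APD(1,3)[OF A, of "lo + m"] by auto
    define j where "j = a (lo + m) - lo"
    have jJ: "j \<in> {..m}" using l by (auto simp: j_def)
    have "a (lo + m) = lo + j" using l by (simp add: j_def)
    then have "a \<in> {a \<in> AP lo (Suc m). a (lo + m) = lo + j}" using A by simp
    then show "a \<in> (\<Union>j\<in>{..m}. {a \<in> AP lo (Suc m). a (lo + m) = lo + j})" using jJ by (intro UN_I)
  qed
qed auto

lemma AP_rec:
  "card (AP lo (Suc m)) = (\<Sum>j\<le>m. card (AP lo j) * card (AP (lo + j) (m - j)))"
proof -
  let ?S = "\<lambda>j. {a \<in> AP lo (Suc m). a (lo + m) = lo + j}"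
  have finS: "\<forall>j\<in>{..m}. finite (?S j)" using AP_finite by simp
  have disj: "\<forall>i\<in>{..m}. \<forall>j\<in>{..m}. i \<noteq> j \<longrightarrow> ?S i \<inter> ?S j = {}"
  proof (intro ballI impI equals0I)
    fix i j b assume ij: "i \<noteq> j" and b: "b \<in> ?S i \<inter> ?S j"
    then have "b (lo + m) = lo + i" "b (lo + m) = lo + j" by simp_all
    then show False using ij by simp
  qed
  have "card (AP lo (Suc m)) = card (\<Union>j\<in>{..m}. ?S j)" by (subst AP_split) (rule refl)
  also have "\<dots> = (\<Sum>j\<le>m. card (?S j))" by (rule card_UN_disjoint[OF finite_atMost finS disj])
  also have "\<dots> = (\<Sum>j\<le>m. card (AP lo j) * card (AP (lo + j) (m - j)))"
    by (intro sum.cong refl card_pieceA) auto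
  finally show ?thesis .
qed

lemma AP_zero: "AP lo 0 = {\<lambda>u. u}"
proof
  show "AP lo 0 \<subseteq> {\<lambda>u. u}"
  proof
    fix b assume B: "b \<in> AP lo 0"
    have "b = (\<lambda>u. u)"
    proof
      fix u have "u < lo \<or> lo + 0 \<le> u" by auto
      then show "b u = u" by (rule APD(2)[OF B])
    qed
    then show "b \<in> {\<lambda>u. u}" by simp
  qed
  have "(\<lambda>u. u) \<in> AP lo 0" by (rule API) simp_all
  then show "{\<lambda>u. u} \<subseteq> AP lo 0" by simp
qed

definition cat :: "nat \<Rightarrow> nat" where "cat m = card (AP 0 m)"

lemma AP_indep: "card (AP lo m) = cat m"
proof (induction m arbitrary: lo rule: less_induct)
  case (less m)
  show ?case
  proof (cases m)
    case 0 then show ?thesis by (simp add: cat_def AP_zero)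
  next
    case (Suc m')
    have IH: "\<And>j lo. j < m \<Longrightarrow> card (AP lo j) = cat j" by (rule less.IH)
    have s: "(\<Sum>j\<le>m'. card (AP lo' j) * card (AP (lo' + j) (m' - j)))
           = (\<Sum>j\<le>m'. cat j * cat (m' - j))" for lo'
    proof (rule sum.cong[OF refl])
      fix j assume "j \<in> {..m'}"
      then have "j < m" "m' - j < m" using Suc by auto
      then show "card (AP lo' j) * card (AP (lo' + j) (m' - j)) = cat j * cat (m' - j)"
        using IH by simp
    qed
    have "card (AP lo m) = (\<Sum>j\<le>m'. cat j * cat (m' - j))"
      using AP_rec[of lo m'] s[of lo] Suc by simp
    moreover have "cat m = card (AP 0 (Suc m'))" using Suc by (simp only: cat_def)
    moreover have "card (AP 0 (Suc m')) = (\<Sum>j\<le>m'. cat j * cat (m' - j))"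
      using AP_rec[of 0 m'] s[of 0] by simp
    ultimately show ?thesis by (simp only:)
  qed
qed

lemma cat_rec: "cat (Suc m) = (\<Sum>j\<le>m. cat j * cat (m - j))"
  using AP_rec[of 0 m] AP_indep by simp

lemma cat_0: "cat 0 = 1" by (simp add: cat_def AP_zero)

lemma card_Aset: "card (Aset n) = cat n"
  using Aset_AP AP_indep by simp

lemma pic_0: "pop_image_card 0 n = cat n"
  using card_reduce[of 0 n] card_Aset by simp

lemma pic_pos: "1 \<le> k \<Longrightarrow> pop_image_card k n = gL k (n - 1)"
  using card_pos_k LM_indep by simp

lemma pic_le: "pop_image_card k n \<le> cat n"
proof -
  have "finite (Aset n)" using Aset_AP AP_finite by simp
  then have "card ((pop ^^ k) ` Aset n) \<le> card (Aset n)" by (rule card_image_le)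
  then show ?thesis using card_reduce card_Aset by simp
qed


lemma tri_le:
  fixes a :: "nat \<Rightarrow> real"
  assumes nn: "\<And>n. 0 \<le> a n"
  shows "(\<Sum>n<N. \<Sum>j\<le>n. a j * a (n - j)) \<le> (\<Sum>n<N. a n)^2"
proof -
  have "(\<Sum>n<N. \<Sum>j\<le>n. a j * a (n - j)) = (\<Sum>(i,j)\<in>{(i,j). i + j < N}. a i * a j)"
    by (rule sum.triangle_reindex[symmetric])
  also have "\<dots> \<le> (\<Sum>(i,j)\<in>{..<N} \<times> {..<N}. a i * a j)"
    by (rule sum_mono2) (auto intro: mult_nonneg_nonneg nn)
  also have "\<dots> = (\<Sum>i<N. \<Sum>j<N. a i * a j)" by (rule sum.cartesian_product[symmetric])
  also have "\<dots> = (\<Sum>n<N. a n)^2" by (simp add: power2_eq_square sum_product)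
  finally show ?thesis .
qed

definition ca :: "nat \<Rightarrow> real" where "ca n = real (cat n) * (1/4)^n"

lemma ca_nn: "0 \<le> ca n" by (simp add: ca_def)

lemma ca_rec: "ca (Suc n) = (1/4) * (\<Sum>j\<le>n. ca j * ca (n - j))"
proof -
  have "ca (Suc n) = (1/4) * ((\<Sum>j\<le>n. real (cat j) * real (cat (n - j))) * (1/4)^n)"
    unfolding ca_def cat_rec by (simp add: of_nat_sum)
  also have "\<dots> = (1/4) * (\<Sum>j\<le>n. real (cat j) * real (cat (n - j)) * (1/4)^n)"
    by (simp add: sum_distrib_right)
  also have "\<dots> = (1/4) * (\<Sum>j\<le>n. ca j * ca (n - j))"
  proof -
    have "real (cat j) * real (cat (n - j)) * (1/4)^n = ca j * ca (n - j)" if "j \<in> {..n}" for j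
    proof -
      have "(1/4::real)^n = (1/4)^j * (1/4)^(n - j)" using that by (simp add: power_add[symmetric])
      then show ?thesis unfolding ca_def by simp
    qed
    then show ?thesis by simp
  qed
  finally show ?thesis .
qed

lemma ca_partial: "(\<Sum>n<N. ca n) \<le> 2"
proof (induction N)
  case 0 then show ?case by simp
next
  case (Suc N)
  have nn: "0 \<le> (\<Sum>n<N. ca n)" by (rule sum_nonneg) (simp add: ca_nn)
  have "(\<Sum>n<Suc N. ca n) = ca 0 + (\<Sum>n<N. ca (Suc n))" by (rule sum.lessThan_Suc_shift)
  also have "\<dots> = 1 + (\<Sum>n<N. (1/4) * (\<Sum>j\<le>n. ca j * ca (n - j)))"
  proof -
    have "ca 0 = 1" by (simp add: ca_def cat_0)
    moreover have "(\<Sum>n<N. ca (Suc n)) = (\<Sum>n<N. (1/4) * (\<Sum>j\<le>n. ca j * ca (n - j)))"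
      by (rule sum.cong[OF refl]) (rule ca_rec)
    ultimately show ?thesis by simp
  qed
  also have "\<dots> = 1 + (1/4) * (\<Sum>n<N. \<Sum>j\<le>n. ca j * ca (n - j))"
    by (simp only: sum_distrib_left)
  also have "\<dots> \<le> 1 + (1/4) * (\<Sum>n<N. ca n)^2"
    using tri_le[of ca N] ca_nn by simp
  also have "\<dots> \<le> 1 + (1/4) * 2^2"
    using Suc nn by (intro add_left_mono mult_left_mono power_mono) auto
  finally show ?case by simp
qed

lemma ca_summable: "summable ca"
  by (rule summableI_nonneg_bounded[of _ 2]) (auto simp: ca_nn ca_partial)

lemma ca_suminf: "suminf ca \<le> 2"
  by (rule suminf_le_const[OF ca_summable]) (simp add: ca_partial)

definition FF :: "nat \<Rightarrow> real fps" where "FF k = Abs_fps (\<lambda>n. real (pop_image_card k n))"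

lemma FF_bound: "norm (fps_nth (FF k) n * x ^ n) \<le> ca n" if "norm x \<le> 1/4" for x :: real
proof -
  have "norm (fps_nth (FF k) n * x ^ n) = real (pop_image_card k n) * \<bar>x\<bar> ^ n"
    by (simp add: FF_def abs_mult power_abs)
  also have "\<dots> \<le> real (cat n) * (1/4) ^ n"
    using pic_le[of k n] that by (intro mult_mono power_mono) auto
  finally show ?thesis by (simp add: ca_def)
qed

lemma FF_radius: "fps_conv_radius (FF k) \<ge> ereal (1/4)"
proof -
  have "summable (\<lambda>n. fps_nth (FF k) n * (1/4::real) ^ n)"
    by (rule summable_comparison_test'[OF ca_summable, of 0]) (use FF_bound in auto)
  then have "conv_radius (fps_nth (FF k)) \<ge> norm (1/4::real)" by (rule conv_radius_geI)
  then show ?thesis by (simp add: fps_conv_radius_def)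
qed

lemma FF_eval_bound:
  assumes "norm x \<le> 1/4" shows "\<bar>eval_fps (FF k) x\<bar> \<le> 2"
proof -
  have sn: "summable (\<lambda>n. norm (fps_nth (FF k) n * x ^ n))"
    by (rule summable_comparison_test'[OF ca_summable, of 0]) (use FF_bound[OF assms] in auto)
  have "\<bar>eval_fps (FF k) x\<bar> = norm (\<Sum>n. fps_nth (FF k) n * x ^ n)" by (simp add: eval_fps_def)
  also have "\<dots> \<le> (\<Sum>n. norm (fps_nth (FF k) n * x ^ n))" by (rule summable_norm[OF sn])
  also have "\<dots> \<le> suminf ca" by (rule suminf_le[OF _ sn ca_summable]) (rule FF_bound[OF assms])
  also have "\<dots> \<le> 2" by (rule ca_suminf)
  finally show ?thesis .
qed


lemma FF_eq0:
  "fps_X * (1 - fps_X) * (FF 0)^2 - (1 - fps_X^(0+1)) * FF 0 + (1 - fps_X^(0+1)) = 0"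
proof -
  let ?F = "FF 0"
  have Fn: "fps_nth ?F n = real (cat n)" for n by (simp add: FF_def pic_0)
  have e: "fps_X * ?F^2 - ?F + 1 = 0"
  proof (rule fps_ext)
    fix n
    show "fps_nth (fps_X * ?F^2 - ?F + 1) n = fps_nth (0::real fps) n"
    proof (cases n)
      case 0 then show ?thesis by (simp add: Fn cat_0)
    next
      case (Suc m)
      have "fps_nth (fps_X * ?F^2) n = fps_nth (?F * ?F) m"
        using Suc by (simp add: power2_eq_square)
      also have "\<dots> = (\<Sum>i=0..m. fps_nth ?F i * fps_nth ?F (m - i))" by (rule fps_mult_nth)
      also have "\<dots> = (\<Sum>i\<le>m. real (cat i) * real (cat (m - i)))"
        by (simp add: Fn atLeast0AtMost)
      also have "\<dots> = fps_nth ?F n" using Suc by (simp add: Fn cat_rec of_nat_sum)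
      finally show ?thesis using Suc by simp
    qed
  qed
  have "fps_X * (1 - fps_X) * ?F^2 - (1 - fps_X^(0+1)) * ?F + (1 - fps_X^(0+1))
        = (1 - fps_X) * (fps_X * ?F^2 - ?F + 1)"
    by (simp add: algebra_simps)
  then show ?thesis using e by simp
qed

lemma gL_small: "q \<le> k \<Longrightarrow> gL k q = 1"
proof (induction q)
  case 0 then show ?case by (simp add: gL_0)
next
  case (Suc q)
  have "{j. j < q \<and> j + k \<le> q} = {}" using Suc.prems by auto
  then show ?case using gL_rec[of k q] Suc by simp
qed

lemma FF_eqk:
  assumes k: "1 \<le> k"
  shows "fps_X * (1 - fps_X) * (FF k)^2 - (1 - fps_X^(k+1)) * FF k + (1 - fps_X^(k+1)) = 0"
proof -
  define G :: "real fps" where "G = Abs_fps (\<lambda>n. real (gL k n))"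
  define H :: "real fps" where "H = Abs_fps (\<lambda>n. if k - 1 \<le> n then real (gL k n) else 0)"
  define P :: "real fps" where "P = (\<Sum>q<k-1. fps_X^q)"
  have hG: "G = 1 + fps_X * G + fps_X^2 * (G * H)"
  proof (rule fps_ext)
    fix n
    show "fps_nth G n = fps_nth (1 + fps_X * G + fps_X^2 * (G * H)) n"
    proof (cases n)
      case 0 then show ?thesis by (simp add: G_def gL_0 fps_X_power_mult_nth)
    next
      case (Suc m)
      show ?thesis
      proof (cases m)
        case 0
        have "gL k (Suc 0) = gL k 0" using gL_rec[of k 0] by simp
        then show ?thesis using Suc 0 by (simp add: G_def fps_X_power_mult_nth)
      next
        case (Suc m')
        have set_eq: "{i \<in> {0..m'}. k - 1 \<le> m' - i} = {j. j < Suc m' \<and> j + k \<le> Suc m'}"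
          using k by auto
        have "fps_nth (G * H) m' = (\<Sum>i=0..m'. real (gL k i) * (if k - 1 \<le> m' - i then real (gL k (m' - i)) else 0))"
          by (simp add: fps_mult_nth G_def H_def)
        also have "\<dots> = (\<Sum>i=0..m'. if k - 1 \<le> m' - i then real (gL k i) * real (gL k (m' - i)) else 0)"
          by (rule sum.cong) auto
        also have "\<dots> = (\<Sum>i\<in>{i \<in> {0..m'}. k - 1 \<le> m' - i}. real (gL k i) * real (gL k (m' - i)))"
          by (rule sum.inter_filter[symmetric]) simp
        also have "\<dots> = (\<Sum>j\<in>{j. j < Suc m' \<and> j + k \<le> Suc m'}. real (gL k j) * real (gL k (Suc m' - 1 - j)))"
          unfolding set_eq by simp
        finally have GH: "fps_nth (G * H) m' = real (\<Sum>j\<in>{j. j < Suc m' \<and> j + k \<le> Suc m'}. gL k j * gL k (Suc m' - 1 - j))"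
          by (simp add: of_nat_sum)
        have "fps_nth G n = real (gL k (Suc m)) " using \<open>n = Suc m\<close> by (simp add: G_def)
        also have "\<dots> = real (gL k m) + fps_nth (G * H) m'" unfolding gL_rec GH using Suc by simp
        also have "\<dots> = fps_nth (1 + fps_X * G + fps_X^2 * (G * H)) n"
          using \<open>n = Suc m\<close> Suc by (simp add: G_def fps_X_power_mult_nth)
        finally show ?thesis .
      qed
    qed
  qed
  have hP: "G = H + P"
  proof (rule fps_ext)
    fix n
    have Pn: "fps_nth P n = (if n < k - 1 then 1 else 0)"
      unfolding P_def fps_sum_nth by (simp add: fps_X_power_nth)
    show "fps_nth G n = fps_nth (H + P) n"
    proof (cases "k - 1 \<le> n")
      case True then show ?thesis using Pn by (simp add: G_def H_def)
    next
      case False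
      then have "gL k n = 1" using gL_small[of n k] by simp
      then show ?thesis using Pn False by (simp add: G_def H_def)
    qed
  qed
  have hOne: "(1 - fps_X) * P = 1 - fps_X^(k-1)"
    unfolding P_def by (rule one_diff_power_eq[symmetric])
  have hF: "FF k = 1 + fps_X * G"
  proof (rule fps_ext)
    fix n show "fps_nth (FF k) n = fps_nth (1 + fps_X * G) n"
      using pic_pos[OF k, of n] by (cases n) (simp_all add: FF_def G_def gL_0)
  qed
  have hX: "fps_X^(k+1) = fps_X^2 * fps_X^(k-1)"
    using k by (simp add: power_add[symmetric])
  define Y :: "real fps" where "Y = fps_X^(k-1)"
  define X :: "real fps" where "X = fps_X"
  have hG': "G = 1 + X * G + X^2 * (G * H)" using hG by (simp add: X_def)
  have hOne': "(1 - X) * P = 1 - Y" using hOne by (simp add: X_def Y_def)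
  have "X * (1 - X) * (1 + X * G)^2 - (1 - X^2 * Y) * (1 + X * G) + (1 - X^2 * Y) = 0"
    using hG' hP hOne' by algebra
  then show ?thesis unfolding hF hX by (simp add: X_def Y_def)
qed

lemma FF_eq:
  "fps_X * (1 - fps_X) * (FF k)^2 - (1 - fps_X^(k+1)) * FF k + (1 - fps_X^(k+1)) = 0"
  using FF_eq0 FF_eqk[of k] by (cases k) auto


lemma rad_mult: "ereal (norm x) < fps_conv_radius f \<Longrightarrow> ereal (norm x) < fps_conv_radius g
   \<Longrightarrow> ereal (norm x) < fps_conv_radius (f * g)"
  for f g :: "real fps"
proof -
  assume "ereal (norm x) < fps_conv_radius f" "ereal (norm x) < fps_conv_radius g"
  then have "ereal (norm x) < min (fps_conv_radius f) (fps_conv_radius g)" by simp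
  then show ?thesis using fps_conv_radius_mult[of f g] by (rule order.strict_trans2)
qed

lemma rad_diff: "ereal (norm x) < fps_conv_radius f \<Longrightarrow> ereal (norm x) < fps_conv_radius g
   \<Longrightarrow> ereal (norm x) < fps_conv_radius (f - g)"
  for f g :: "real fps"
proof -
  assume "ereal (norm x) < fps_conv_radius f" "ereal (norm x) < fps_conv_radius g"
  then have "ereal (norm x) < min (fps_conv_radius f) (fps_conv_radius g)" by simp
  then show ?thesis using fps_conv_radius_diff[of f g] by (rule order.strict_trans2)
qed

lemma rad_add: "ereal (norm x) < fps_conv_radius f \<Longrightarrow> ereal (norm x) < fps_conv_radius g
   \<Longrightarrow> ereal (norm x) < fps_conv_radius (f + g)"
  for f g :: "real fps"
proof -
  assume "ereal (norm x) < fps_conv_radius f" "ereal (norm x) < fps_conv_radius g"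
  then have "ereal (norm x) < min (fps_conv_radius f) (fps_conv_radius g)" by simp
  then show ?thesis using fps_conv_radius_add[of f g] by (rule order.strict_trans2)
qed

lemma rad_pow: "ereal (norm x) < fps_conv_radius f \<Longrightarrow> ereal (norm x) < fps_conv_radius (f ^ n)"
  for f :: "real fps"
  by (erule order.strict_trans2) (rule fps_conv_radius_power)

lemma FF_quad:
  assumes x: "norm x < 1/4"
  shows "x * (1 - x) * (eval_fps (FF k) x)^2 - (1 - x^(k+1)) * eval_fps (FF k) x + (1 - x^(k+1)) = 0"
proof -
  have rF: "ereal (norm x) < fps_conv_radius (FF k)"
  proof -
    have "ereal (norm x) < ereal (1/4)" using x by simp
    then show ?thesis using FF_radius[of k] by (rule order.strict_trans2)
  qed
  have rX: "ereal (norm x) < fps_conv_radius (fps_X :: real fps)" by simp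
  have r1: "ereal (norm x) < fps_conv_radius (1 :: real fps)" by simp
  have rXp: "ereal (norm x) < fps_conv_radius ((fps_X :: real fps) ^ (k+1))"
    by (simp only: fps_conv_radius_fps_X_power) simp
  have r1X: "ereal (norm x) < fps_conv_radius (1 - (fps_X :: real fps))" by (rule rad_diff[OF r1 rX])
  have rB: "ereal (norm x) < fps_conv_radius (1 - (fps_X :: real fps)^(k+1))" by (rule rad_diff[OF r1 rXp])
  have rF2: "ereal (norm x) < fps_conv_radius ((FF k)^2)" by (rule rad_pow[OF rF])
  have rXX: "ereal (norm x) < fps_conv_radius (fps_X * (1 - (fps_X :: real fps)))" by (rule rad_mult[OF rX r1X])
  have rT1: "ereal (norm x) < fps_conv_radius (fps_X * (1 - fps_X) * (FF k)^2)" by (rule rad_mult[OF rXX rF2])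
  have rT2: "ereal (norm x) < fps_conv_radius ((1 - fps_X^(k+1)) * FF k)" by (rule rad_mult[OF rB rF])
  have rT12: "ereal (norm x) < fps_conv_radius (fps_X * (1 - fps_X) * (FF k)^2 - (1 - fps_X^(k+1)) * FF k)"
    by (rule rad_diff[OF rT1 rT2])
  have "0 = eval_fps (fps_X * (1 - fps_X) * (FF k)^2 - (1 - fps_X^(k+1)) * FF k + (1 - fps_X^(k+1))) x"
    using FF_eq[of k] by simp
  also have "\<dots> = eval_fps (fps_X * (1 - fps_X) * (FF k)^2 - (1 - fps_X^(k+1)) * FF k) x + eval_fps (1 - fps_X^(k+1)) x"
    by (rule eval_fps_add[OF rT12 rB])
  also have "eval_fps (fps_X * (1 - fps_X) * (FF k)^2 - (1 - fps_X^(k+1)) * FF k) x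
      = eval_fps (fps_X * (1 - fps_X) * (FF k)^2) x - eval_fps ((1 - fps_X^(k+1)) * FF k) x"
    by (rule eval_fps_diff[OF rT1 rT2])
  also have "eval_fps (fps_X * (1 - fps_X) * (FF k)^2) x = eval_fps (fps_X * (1 - fps_X)) x * eval_fps ((FF k)^2) x"
    by (rule eval_fps_mult[OF rXX rF2])
  also have "eval_fps (fps_X * (1 - fps_X)) x = eval_fps fps_X x * eval_fps (1 - fps_X) x"
    by (rule eval_fps_mult[OF rX r1X])
  also have "eval_fps (1 - fps_X) x = eval_fps 1 x - eval_fps fps_X x"
    by (rule eval_fps_diff[OF r1 rX])
  also have "eval_fps ((FF k)^2) x = (eval_fps (FF k) x)^2" by (rule eval_fps_power[OF rF])
  also have "eval_fps ((1 - fps_X^(k+1)) * FF k) x = eval_fps (1 - fps_X^(k+1)) x * eval_fps (FF k) x"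
    by (rule eval_fps_mult[OF rB rF])
  also have "eval_fps (1 - fps_X^(k+1)) x = eval_fps 1 x - eval_fps (fps_X^(k+1)) x"
    by (rule eval_fps_diff[OF r1 rXp])
  also have "eval_fps (fps_X^(k+1)) x = x^(k+1)" by (rule eval_fps_X_power)
  finally show ?thesis by simp
qed

lemma quad_root:
  fixes x s B :: real
  assumes Q: "x * (1 - x) * s^2 - B * s + B = 0" and x0: "0 < \<bar>x\<bar>" and x1: "\<bar>x\<bar> < 1/16"
    and B: "15/16 \<le> B" and s: "\<bar>s\<bar> \<le> 2"
  shows "s = (B - sqrt (B^2 - 4 * x * (1 - x) * B)) / (2 * x * (1 - x))"
proof -
  define a where "a = x * (1 - x)"
  have x1': "x \<noteq> 1" using x1 by auto
  have a0: "a \<noteq> 0" using x0 x1' by (simp add: a_def)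
  have sq: "(2 * a * s - B)^2 = B^2 - 4 * a * B"
  proof -
    have "(2 * a * s - B)^2 - (B^2 - 4 * a * B) = 4 * a * (x * (1 - x) * s^2 - B * s + B)"
      by (simp add: a_def power2_eq_square algebra_simps)
    then show ?thesis using Q by simp
  qed
  have D: "B^2 - 4 * x * (1 - x) * B = (2 * a * s - B)^2" using sq by (simp add: a_def mult.assoc)
  have "\<bar>1 - x\<bar> \<le> 17/16" using x1 by linarith
  then have "\<bar>a\<bar> \<le> 1/16 * (17/16)"
    unfolding a_def abs_mult using x1 by (intro mult_mono) auto
  then have "\<bar>a\<bar> * \<bar>s\<bar> \<le> 1/16 * (17/16) * 2"
    using s by (intro mult_mono) auto
  then have "\<bar>2 * a * s\<bar> < B" using B by (simp add: abs_mult)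
  then have neg: "2 * a * s - B < 0" by linarith
  have "sqrt (B^2 - 4 * x * (1 - x) * B) = B - 2 * a * s"
    unfolding D real_sqrt_abs using neg by simp
  then have "B - sqrt (B^2 - 4 * x * (1 - x) * B) = 2 * a * s" by simp
  then show ?thesis using a0 by (simp add: a_def mult.assoc)
qed


theorem theorem1p3:
  fixes k :: nat
  shows "\<exists>r>0. \<forall>x::real. 0 < \<bar>x\<bar> \<and> \<bar>x\<bar> < r \<longrightarrow>
    (\<lambda>n. real (pop_image_card k n) * x ^ n) sums
      ((1 - x ^ (k + 1) - sqrt ((1 - x ^ (k + 1))\<^sup>2 - 4 * x * (1 - x) * (1 - x ^ (k + 1))))
        / (2 * x * (1 - x)))"
proof (intro exI[of _ "1/16 :: real"] conjI allI impI)
  show "(0::real) < 1/16" by simp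
  fix x :: real assume hx: "0 < \<bar>x\<bar> \<and> \<bar>x\<bar> < 1/16"
  have x4: "norm x < 1/4" using hx by simp
  have rF: "ereal (norm x) < fps_conv_radius (FF k)"
  proof -
    have "ereal (norm x) < ereal (1/4)" using x4 by simp
    then show ?thesis using FF_radius[of k] by (rule order.strict_trans2)
  qed
  have sm: "(\<lambda>n. fps_nth (FF k) n * x ^ n) sums eval_fps (FF k) x" by (rule sums_eval_fps[OF rF])
  have Q: "x * (1 - x) * (eval_fps (FF k) x)^2 - (1 - x^(k+1)) * eval_fps (FF k) x + (1 - x^(k+1)) = 0"
    by (rule FF_quad[OF x4])
  have sb: "\<bar>eval_fps (FF k) x\<bar> \<le> 2" using FF_eval_bound[of x k] x4 by simp
  have "\<bar>x ^ (k+1)\<bar> \<le> \<bar>x\<bar>"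
    unfolding power_abs using hx by (simp only: Suc_eq_plus1[symmetric]) (rule power_Suc_le_self, auto)
  then have B: "15/16 \<le> 1 - x^(k+1)" using hx by linarith
  have "eval_fps (FF k) x = (1 - x ^ (k + 1) - sqrt ((1 - x ^ (k + 1))\<^sup>2 - 4 * x * (1 - x) * (1 - x ^ (k + 1))))
        / (2 * x * (1 - x))"
    by (rule quad_root[OF Q _ _ B sb]) (use hx in auto)
  moreover have "(\<lambda>n. fps_nth (FF k) n * x ^ n) = (\<lambda>n. real (pop_image_card k n) * x ^ n)"
    by (simp add: FF_def)
  ultimately show "(\<lambda>n. real (pop_image_card k n) * x ^ n) sums
      ((1 - x ^ (k + 1) - sqrt ((1 - x ^ (k + 1))\<^sup>2 - 4 * x * (1 - x) * (1 - x ^ (k + 1))))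
        / (2 * x * (1 - x)))" using sm by simp
qed


end
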